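(* Let $T>0$, let $\lambda^*$ be a conditional intensity of a temporal point process on $[0,T]$, and let $(\mathcal{T}_n)_{n\in\mathbb{N}}$ be a dissecting system of partitions of $(0,T]$, where $\mathcal{T}_n=\{(a_i^{(n)},b_i^{(n)}]:i=1,\dots,k_n\}$ consists of intervals. Let $P_0$ be the distribution of the unit rate Poisson point process on $[0,T]$ and, for a realization $\varphi=\{t_1<\dots<t_m\}$, define $$p_i^{(n)}=1-\exp\Big(-\int_{a_i^{(n)}}^{b_i^{(n)}}\lambda^*\big(t\mid t_j<a_i^{(n)}\big)\,dt\Big),\qquad i=1,\dots,k_n,\ n\in\mathbb{N}.$$ Then $$S_{\mathrm{int}}^{\mathcal{T}_n}\big(p_1^{(n)},\dots,p_{k_n}^{(n)},\varphi\big)+\sum_{i=1}^{k_n}\mathbf{1}\{\varphi((a_i^{(n)},b_i^{(n)}])>0\}\log\big(b_i^{(n)}-a_i^{(n)}\big)\longrightarrow S(\lambda^*,\varphi)$$ as $n\to\infty$ for $P_0$-a.e. $\varphi\in\mathbb{M}_0([0,T])$, where $S(\lambda^*,\{t_1,\dots,t_m\})=-\sum_{i=1}^m\log\lambda^*(t_i)+\int_0^T\lambda^*(u)\,du$.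
   Context: The conditional intensity $\lambda^*(t)=\lim_{\Delta t\to0}\mathbb{E}[\Phi((t,t+\Delta t))\mid\mathcal{H}_t]/\Delta t$ (history filtration $\mathcal{H}_t$), taken left-continuous; $\lambda^*(t\mid t_1,\dots,t_i)$ is its value at $t$ given past points $t_1<\dots<t_i\le t$, $\lambda^*(t\mid t_j<a)$ denotes the value computed from the points of $\varphi$ before $a$, and $\lambda^*(t_i)$ means $\lambda^*(t_i\mid t_1,\dots,t_{i-1})$. $\mathbb{M}_0([0,T])$ is the space of finite counting measures on $[0,T]$. For a partition $\mathcal{T}_n$ of $(0,T]$ into intervals $(a_i,b_i]$, $i=1,\dots,k_n$, the interval scoring function is $S_{\mathrm{int}}^{\mathcal{T}_n}(p_1,\dots,p_{k_n},\varphi)=\sum_{i=1}^{k_n}\big[-\mathbf{1}\{\varphi((a_i,b_i])>0\}\log p_i-\mathbf{1}\{\varphi((a_i,b_i])=0\}\log(1-p_i)\big]$. A sequence of partitions is dissecting if it is nested (each partition refines the previous) and asymptotically separates every pair of distinct points. *)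

theory Defs
  imports "HOL-Probability.Probability"
begin

text \<open>Configurations (realisations of a simple finite point process on [0,T]) are
  represented as finite sets of reals in [0,T].\<close>

definition config_space :: "real \<Rightarrow> real set measure" where
  "config_space T =
     sigma {\<phi>. finite \<phi> \<and> \<phi> \<subseteq> {0..T}}
       {{\<phi>. finite \<phi> \<and> \<phi> \<subseteq> {0..T} \<and> card (\<phi> \<inter> A) = j} | A j. A \<in> sets borel}"

definition poisson_P0 :: "real \<Rightarrow> real set measure" where
  "poisson_P0 T =
     distr (measure_pmf (poisson_pmf T) \<Otimes>\<^sub>M (\<Pi>\<^sub>M i\<in>(UNIV::nat set). uniform_measure lborel {0..T}))
       (config_space T) (\<lambda>(N, x). x ` {..<N})"

text \<open>Conditional intensity: lam t H is lambda*(t | t_1,...,t_i) where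
  H = [t_1,...,t_i] is the strictly increasing list of past points.\<close>

definition conditional_intensity :: "real \<Rightarrow> (real \<Rightarrow> real list \<Rightarrow> real) \<Rightarrow> bool" where
  "conditional_intensity T lam \<longleftrightarrow>
     (\<forall>t H. sorted_wrt (<) H \<longrightarrow> 0 \<le> lam t H) \<and>
     (\<forall>i. (\<lambda>(t, x::nat \<Rightarrow> real). if sorted_wrt (<) (map x [0..<i]) then lam t (map x [0..<i]) else 0)
            \<in> borel_measurable (lborel \<Otimes>\<^sub>M (\<Pi>\<^sub>M j\<in>{..<i}. lborel))) \<and>
     (\<forall>H. sorted_wrt (<) H \<and> set H \<subseteq> {0..T} \<longrightarrow> set_integrable lborel {0..T} (\<lambda>t. lam t H))"

definition hist :: "real set \<Rightarrow> real \<Rightarrow> real list" where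
  "hist \<phi> a = sorted_list_of_set {s \<in> \<phi>. s < a}"

definition nlog :: "real \<Rightarrow> ereal" where
  "nlog x = (if x \<le> 0 then \<infinity> else ereal (- ln x))"

definition interval_partition :: "real \<Rightarrow> nat \<Rightarrow> (nat \<Rightarrow> real) \<Rightarrow> (nat \<Rightarrow> real) \<Rightarrow> bool" where
  "interval_partition T k a b \<longleftrightarrow>
     (\<forall>i<k. a i < b i) \<and>
     (\<forall>i<k. \<forall>j<k. i \<noteq> j \<longrightarrow> {a i<..b i} \<inter> {a j<..b j} = {}) \<and>
     (\<Union>i<k. {a i<..b i}) = {0<..T}"

definition dissecting :: "real \<Rightarrow> (nat \<Rightarrow> nat) \<Rightarrow> (nat \<Rightarrow> nat \<Rightarrow> real) \<Rightarrow> (nat \<Rightarrow> nat \<Rightarrow> real) \<Rightarrow> bool" where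
  "dissecting T k a b \<longleftrightarrow>
     (\<forall>n. interval_partition T (k n) (a n) (b n)) \<and>
     (\<forall>n. \<forall>i<k (Suc n). \<exists>j<k n. {a (Suc n) i<..b (Suc n) i} \<subseteq> {a n j<..b n j}) \<and>
     (\<forall>x\<in>{0<..T}. \<forall>y\<in>{0<..T}. x \<noteq> y \<longrightarrow>
        (\<exists>n. \<forall>i<k n. \<not> (x \<in> {a n i<..b n i} \<and> y \<in> {a n i<..b n i})))"

definition S_int :: "nat \<Rightarrow> (nat \<Rightarrow> real) \<Rightarrow> (nat \<Rightarrow> real) \<Rightarrow> (nat \<Rightarrow> real) \<Rightarrow> real set \<Rightarrow> ereal" where
  "S_int k a b p \<phi> =
     (\<Sum>i<k. if card (\<phi> \<inter> {a i<..b i}) > 0 then nlog (p i) else nlog (1 - p i))"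

definition p_int :: "(real \<Rightarrow> real list \<Rightarrow> real) \<Rightarrow> real set \<Rightarrow> real \<Rightarrow> real \<Rightarrow> real" where
  "p_int lam \<phi> a b = 1 - exp (- (\<integral>t\<in>{a..b}. lam t (hist \<phi> a) \<partial>lborel))"

definition S_ll :: "real \<Rightarrow> (real \<Rightarrow> real list \<Rightarrow> real) \<Rightarrow> real set \<Rightarrow> ereal" where
  "S_ll T lam \<phi> =
     (\<Sum>t\<in>\<phi>. nlog (lam t (hist \<phi> t))) + ereal (\<integral>u\<in>{0..T}. lam u (hist \<phi> u) \<partial>lborel)"

end

theory Submission
  imports Defs
begin


locale dis =
  fixes T :: real and k :: "nat \<Rightarrow> nat" and a b :: "nat \<Rightarrow> nat \<Rightarrow> real"
  assumes Tpos: "T > 0" and dis: "dissecting T k a b"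
begin

lemma part: "interval_partition T (k n) (a n) (b n)"
  using dis by (auto simp: dissecting_def)

lemma ab_less: "i < k n \<Longrightarrow> a n i < b n i"
  using part[of n] by (auto simp: interval_partition_def)

lemma cell_sub: "i < k n \<Longrightarrow> {a n i<..b n i} \<subseteq> {0<..T}"
  using part[of n] unfolding interval_partition_def by blast

lemma b_le: "i < k n \<Longrightarrow> b n i \<le> T"
  using cell_sub[of i n] ab_less[of i n] by auto

lemma a_ge: assumes "i < k n" shows "0 \<le> a n i"
proof (rule ccontr)
  assume "\<not> 0 \<le> a n i"
  then have "min (b n i) 0 \<in> {a n i<..b n i}" using ab_less[OF assms] by auto
  then have "min (b n i) 0 \<in> {0<..T}" using cell_sub[OF assms] by blast
  then show False by simp
qed

lemma disj: "i < k n \<Longrightarrow> j < k n \<Longrightarrow> x \<in> {a n i<..b n i} \<Longrightarrow> x \<in> {a n j<..b n j} \<Longrightarrow> i = j"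
  using part[of n] unfolding interval_partition_def by blast

lemma ex_cell: "x \<in> {0<..T} \<Longrightarrow> \<exists>i<k n. x \<in> {a n i<..b n i}"
  using part[of n] unfolding interval_partition_def by blast

definition ci :: "nat \<Rightarrow> real \<Rightarrow> nat" where
  "ci n x = (THE i. i < k n \<and> x \<in> {a n i<..b n i})"

lemma ci: assumes "x \<in> {0<..T}" shows "ci n x < k n" "x \<in> {a n (ci n x)<..b n (ci n x)}"
proof -
  obtain i where i: "i < k n" "x \<in> {a n i<..b n i}" using ex_cell[OF assms] by blast
  have "ci n x = i" unfolding ci_def
    by (rule the_equality) (use i disj in blast)+
  then show "ci n x < k n" "x \<in> {a n (ci n x)<..b n (ci n x)}" using i by auto
qed

lemma ci_eq: "i < k n \<Longrightarrow> x \<in> {a n i<..b n i} \<Longrightarrow> ci n x = i"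
  using ci[of x n] cell_sub[of i n] disj by blast

abbreviation "A n x \<equiv> a n (ci n x)"
abbreviation "B n x \<equiv> b n (ci n x)"

lemma nested_Suc: assumes "x \<in> {0<..T}"
  shows "{A (Suc n) x<..B (Suc n) x} \<subseteq> {A n x<..B n x}"
proof -
  obtain j where j: "j < k n" "{A (Suc n) x<..B (Suc n) x} \<subseteq> {a n j<..b n j}"
    using dis ci(1)[OF assms, of "Suc n"] unfolding dissecting_def by blast
  then have "x \<in> {a n j<..b n j}" using ci(2)[OF assms, of "Suc n"] by blast
  then have "ci n x = j" using ci_eq j(1) by blast
  then show ?thesis using j by simp
qed

lemma nested: assumes "x \<in> {0<..T}" "n \<le> m"
  shows "{A m x<..B m x} \<subseteq> {A n x<..B n x}"
  using assms(2)
proof (induction m)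
  case 0 then show ?case by simp
next
  case (Suc m)
  show ?case
  proof (cases "n = Suc m")
    case False
    then show ?thesis using Suc nested_Suc[OF assms(1), of m] by auto
  qed simp
qed

lemma ivl_sub: "(l::real) < u \<Longrightarrow> {l<..u} \<subseteq> {l'<..u'} \<Longrightarrow> l' \<le> l \<and> u \<le> u'"
proof -
  assume *: "l < u" "{l<..u} \<subseteq> {l'<..u'}"
  have "u \<le> u'" using * by auto
  moreover have "l' \<le> l"
  proof (rule ccontr)
    assume "\<not> l' \<le> l"
    then have "min u l' \<in> {l<..u}" using * by auto
    then have "min u l' \<in> {l'<..u'}" using * by blast
    then show False by simp
  qed
  ultimately show ?thesis by auto
qed

lemma AB_mono: assumes "x \<in> {0<..T}" "n \<le> m"
  shows "A n x \<le> A m x" "B m x \<le> B n x"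
  using ivl_sub[OF ab_less[OF ci(1)[OF assms(1)]] nested[OF assms]] by auto

lemma in_cell: "x \<in> {0<..T} \<Longrightarrow> A n x < x \<and> x \<le> B n x"
  using ci(2) by auto

lemma sep: assumes "x \<in> {0<..T}" "y \<in> {0<..T}" "x \<noteq> y"
  shows "\<exists>N. \<forall>n\<ge>N. y \<notin> {A n x<..B n x}"
proof -
  obtain N where N: "\<forall>i<k N. \<not> (x \<in> {a N i<..b N i} \<and> y \<in> {a N i<..b N i})"
    using dis assms unfolding dissecting_def by blast
  have "y \<notin> {A n x<..B n x}" if "n \<ge> N" for n
    using nested[OF assms(1) that] N ci[OF assms(1), of N] by blast
  then show ?thesis by blast
qed

lemma len_tendsto: assumes x: "x \<in> {0<..T}"
  shows "(\<lambda>n. B n x - A n x) \<longlonglongrightarrow> 0"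
proof -
  have incA: "incseq (\<lambda>n. A n x)" using AB_mono(1)[OF x] by (auto simp: incseq_def)
  have decB: "decseq (\<lambda>n. B n x)" using AB_mono(2)[OF x] by (auto simp: decseq_def)
  have bA: "A n x \<le> x" and bB: "x \<le> B n x" for n using in_cell[OF x, of n] by auto
  obtain \<alpha> where al: "(\<lambda>n. A n x) \<longlonglongrightarrow> \<alpha>"
    using incseq_convergent[OF incA, of x] bA by blast
  obtain \<beta> where be: "(\<lambda>n. B n x) \<longlonglongrightarrow> \<beta>"
    using decseq_convergent[OF decB, of x] bB by blast
  have aA: "A n x \<le> \<alpha>" for n using incseq_le[OF incA al] by blast
  have bB': "\<beta> \<le> B n x" for n using decseq_ge[OF decB be] by blast
  have "\<alpha> \<le> x" using al bA by (simp add: LIMSEQ_le_const2)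
  have "x \<le> \<beta>" using be bB by (simp add: LIMSEQ_le_const)
  have "\<alpha> = x"
  proof (rule ccontr)
    assume "\<alpha> \<noteq> x"
    then have lt: "\<alpha> < x" using \<open>\<alpha> \<le> x\<close> by auto
    define y where "y = (\<alpha> + x) / 2"
    have "0 \<le> A 0 x" using a_ge ci(1)[OF x] by blast
    then have "0 \<le> \<alpha>" using aA[of 0] by linarith
    then have y: "y \<in> {0<..T}" "y \<noteq> x" using lt x by (auto simp: y_def)
    have "y \<in> {A n x<..B n x}" for n using aA[of n] bB[of n] lt by (auto simp: y_def)
    then show False using sep[OF x y(1) y(2)[symmetric]] by blast
  qed
  moreover have "\<beta> = x"
  proof (rule ccontr)
    assume "\<beta> \<noteq> x"
    then have lt: "x < \<beta>" using \<open>x \<le> \<beta>\<close> by auto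
    define y where "y = (\<beta> + x) / 2"
    have "B 0 x \<le> T" using b_le ci(1)[OF x] by blast
    then have "\<beta> \<le> T" using bB'[of 0] by linarith
    then have y: "y \<in> {0<..T}" "y \<noteq> x" using lt x by (auto simp: y_def)
    have "y \<in> {A n x<..B n x}" for n using bA[of n] bB'[of n] lt by (auto simp: y_def)
    then show False using sep[OF x y(1) y(2)[symmetric]] by blast
  qed
  ultimately show ?thesis using tendsto_diff[OF be al] by simp
qed

end


context dis
begin

definition avg :: "(real \<Rightarrow> real) \<Rightarrow> nat \<Rightarrow> real \<Rightarrow> real" where
  "avg f n x = (\<Sum>i<k n. indicator {a n i<..b n i} x * ((\<integral>t\<in>{a n i..b n i}. f t \<partial>lborel) / (b n i - a n i)))"

lemma avg_eq: assumes "x \<in> {0<..T}"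
  shows "avg f n x = (\<integral>t\<in>{A n x..B n x}. f t \<partial>lborel) / (B n x - A n x)"
proof -
  have "avg f n x = (\<Sum>i<k n. if i = ci n x then (\<integral>t\<in>{a n i..b n i}. f t \<partial>lborel) / (b n i - a n i) else 0)"
    unfolding avg_def
  proof (rule sum.cong)
    fix i assume "i \<in> {..<k n}"
    then show "indicator {a n i<..b n i} x * ((\<integral>t\<in>{a n i..b n i}. f t \<partial>lborel) / (b n i - a n i)) =
      (if i = ci n x then (\<integral>t\<in>{a n i..b n i}. f t \<partial>lborel) / (b n i - a n i) else 0)"
    proof (cases "i = ci n x")
      case True
      then have "x \<in> {a n i<..b n i}" using ci(2)[OF assms, of n] by simp
      then show ?thesis using True by simp
    next
      case False
      then have "x \<notin> {a n i<..b n i}" using ci_eq[of i n x] \<open>i \<in> {..<k n}\<close> by auto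
      then show ?thesis using False by simp
    qed
  qed simp
  also have "\<dots> = (\<integral>t\<in>{A n x..B n x}. f t \<partial>lborel) / (B n x - A n x)"
    using ci(1)[OF assms, of n] by (subst sum.delta) simp_all
  finally show ?thesis .
qed

lemma borel_avg[measurable]: "avg f n \<in> borel_measurable borel"
  unfolding avg_def
  by (intro borel_measurable_sum borel_measurable_times borel_measurable_const borel_measurable_indicator) simp

lemma cover:
  assumes E: "E \<subseteq> {0<..T}" and U: "open U" "E \<subseteq> U"
    and Q: "\<And>x. x \<in> E \<Longrightarrow> \<exists>\<^sub>F n in sequentially. Q n (ci n x)"
  obtains P where "countable P" "P \<subseteq> {(n,i). i < k n \<and> Q n i \<and> {a n i<..b n i} \<subseteq> U}"
    "disjoint_family_on (\<lambda>p. {a (fst p) (snd p)<..b (fst p) (snd p)}) P"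
    "E \<subseteq> (\<Union>p\<in>P. {a (fst p) (snd p)<..b (fst p) (snd p)})"
proof -
  define R where "R n x \<longleftrightarrow> {A n x<..B n x} \<subseteq> U \<and> Q n (ci n x)" for n x
  have exR: "\<exists>n. R n x" if x: "x \<in> E" for x
  proof -
    have x0: "x \<in> {0<..T}" using x E by auto
    obtain d where d: "d > 0" "ball x d \<subseteq> U" using U x open_contains_ball by blast
    have "eventually (\<lambda>n. B n x - A n x < d) sequentially"
      using len_tendsto[OF x0] d(1) by (rule order_tendstoD)
    then have ev: "eventually (\<lambda>n. {A n x<..B n x} \<subseteq> U) sequentially"
    proof (rule eventually_mono)
      fix n assume "B n x - A n x < d"
      moreover have "A n x < x \<and> x \<le> B n x" using in_cell[OF x0] .
      ultimately have "{A n x<..B n x} \<subseteq> ball x d" by (auto simp: dist_real_def)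
      then show "{A n x<..B n x} \<subseteq> U" using d by blast
    qed
    have "\<exists>\<^sub>F n in sequentially. R n x"
      using frequently_eventually_conj[OF Q[OF x] ev] by (simp add: R_def conj_commute)
    then show ?thesis using frequently_ex by blast
  qed
  define m where "m x = (LEAST n. R n x)" for x
  have Rm: "R (m x) x" if "x \<in> E" for x using exR[OF that] unfolding m_def by (rule LeastI_ex)
  have mle: "m x \<le> n" if "R n x" for x n unfolding m_def using that by (rule Least_le)
  define P where "P = (\<lambda>x. (m x, ci (m x) x)) ` E"
  have x0: "x \<in> {0<..T}" if "x \<in> E" for x using that E by auto
  show thesis
  proof
    show "countable P" by (rule countable_subset[of _ UNIV]) auto
    show "P \<subseteq> {(n,i). i < k n \<and> Q n i \<and> {a n i<..b n i} \<subseteq> U}"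
      using Rm ci(1)[OF x0] unfolding P_def R_def by auto
    show "E \<subseteq> (\<Union>p\<in>P. {a (fst p) (snd p)<..b (fst p) (snd p)})"
      using ci(2)[OF x0] unfolding P_def by force
    have key: "(m x, ci (m x) x) = (m y, ci (m y) y)"
      if xy: "x \<in> E" "y \<in> E" "m x \<le> m y" and z: "z \<in> {A (m x) x<..B (m x) x}" "z \<in> {A (m y) y<..B (m y) y}" for x y z
    proof -
      have z0: "z \<in> {0<..T}" using z cell_sub ci(1)[OF x0[OF xy(1)]] by blast
      have cz1: "ci (m x) z = ci (m x) x" using ci_eq[OF ci(1)[OF x0[OF xy(1)]] z(1)] .
      have cz2: "ci (m y) z = ci (m y) y" using ci_eq[OF ci(1)[OF x0[OF xy(2)]] z(2)] .
      have "y \<in> {A (m y) z<..B (m y) z}" using cz2 ci(2)[OF x0[OF xy(2)]] by simp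
      then have "y \<in> {A (m x) z<..B (m x) z}" using nested[OF z0 xy(3)] by blast
      then have cy: "ci (m x) y = ci (m x) x"
        using ci_eq[OF ci(1)[OF z0]] cz1 by metis
      have "R (m x) y" using Rm[OF xy(1)] cy unfolding R_def by simp
      then have "m y \<le> m x" by (rule mle)
      then have "m x = m y" using xy(3) by simp
      then show ?thesis using cz1 cz2 by metis
    qed
    show "disjoint_family_on (\<lambda>p. {a (fst p) (snd p)<..b (fst p) (snd p)}) P"
      unfolding disjoint_family_on_def
    proof (intro ballI impI)
      fix p q assume pq: "p \<in> P" "q \<in> P" "p \<noteq> q"
      obtain x where x: "x \<in> E" "p = (m x, ci (m x) x)" using pq(1) unfolding P_def by blast
      obtain y where y: "y \<in> E" "q = (m y, ci (m y) y)" using pq(2) unfolding P_def by blast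
      show "{a (fst p) (snd p)<..b (fst p) (snd p)} \<inter> {a (fst q) (snd q)<..b (fst q) (snd q)} = {}"
      proof (rule ccontr)
        assume "{a (fst p) (snd p)<..b (fst p) (snd p)} \<inter> {a (fst q) (snd q)<..b (fst q) (snd q)} \<noteq> {}"
        then obtain z where "z \<in> {a (fst p) (snd p)<..b (fst p) (snd p)} \<inter> {a (fst q) (snd q)<..b (fst q) (snd q)}"
          by blast
        then have z: "z \<in> {A (m x) x<..B (m x) x}" "z \<in> {A (m y) y<..B (m y) y}"
          using x(2) y(2) by auto
        show False
        proof (cases "m x \<le> m y")
          case True then show ?thesis using key[OF x(1) y(1) True z] pq(3) x(2) y(2) by metis
        next
          case False then have "m y \<le> m x" by simp
          then show ?thesis using key[OF y(1) x(1) _ z(2) z(1)] pq(3) x(2) y(2) by metis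
        qed
      qed
    qed
  qed
qed

end


context dis
begin

lemma F_borel: "integrable lborel F \<Longrightarrow> F \<in> borel_measurable borel"
  using borel_measurable_integrable[of lborel F] by simp

lemma dens_cell:
  fixes F :: "real \<Rightarrow> real"
  assumes F: "integrable lborel F" "\<And>x. 0 \<le> F x" and ab: "l \<le> u"
  shows "emeasure (density lborel (\<lambda>x. ennreal (F x))) {l<..u} = ennreal (\<integral>t\<in>{l..u}. F t \<partial>lborel)"
proof -
  have Fm: "F \<in> borel_measurable lborel" using F(1) by auto
  have "emeasure (density lborel (\<lambda>x. ennreal (F x))) {l<..u} = (\<integral>\<^sup>+x. ennreal (F x) * indicator {l<..u} x \<partial>lborel)"
    using Fm by (intro emeasure_density) auto
  also have "\<dots> = (\<integral>\<^sup>+x. ennreal (indicator {l..u} x * F x) \<partial>lborel)"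
  proof (rule nn_integral_cong_AE)
    show "AE x in lborel. ennreal (F x) * indicator {l<..u} x = ennreal (indicator {l..u} x * F x)"
      using AE_lborel_singleton[of l] by eventually_elim (simp split: split_indicator)
  qed
  also have "\<dots> = ennreal (\<integral>x. indicator {l..u} x * F x \<partial>lborel)"
  proof (rule nn_integral_eq_integral)
    show "integrable lborel (\<lambda>x. indicator {l..u} x * F x)"
      using integrable_mult_indicator[of "{l..u}" lborel F] F(1) by simp
  qed (use F(2) in auto)
  finally show ?thesis by (simp add: set_lebesgue_integral_def)
qed

lemma avg_nonneg: assumes "x \<in> {0<..T}" "\<And>x. 0 \<le> F x" shows "0 \<le> avg F n x"
proof -
  have "0 \<le> (\<integral>t\<in>{A n x..B n x}. F t \<partial>lborel)"
    unfolding set_lebesgue_integral_def using assms(2) by (intro integral_nonneg_AE) (simp split: split_indicator)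
  moreover have "A n x < B n x" using ab_less ci(1)[OF assms(1)] by blast
  ultimately show ?thesis using avg_eq[OF assms(1)] by simp
qed

lemma E_sets:
  assumes F: "integrable lborel F"
  shows "{x\<in>{0<..T}. F x < r' \<and> (\<exists>\<^sub>F n in sequentially. avg F n x > r)} \<in> sets borel"
    and "{x\<in>{0<..T}. r' < F x \<and> (\<exists>\<^sub>F n in sequentially. avg F n x < r)} \<in> sets borel"
proof -
  have Fm: "F \<in> borel_measurable borel" using F_borel[OF F] .
  have pre: "g -` S \<in> sets borel" if "g \<in> borel_measurable borel" "S \<in> sets borel" for g :: "real \<Rightarrow> real" and S
    using measurable_sets[OF that] by simp
  have 1: "avg F n -` {r<..} \<in> sets borel" "avg F n -` {..<r} \<in> sets borel" for n
    by (rule pre[OF borel_avg]; simp)+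
  have 2: "(\<Union>n\<in>{N..}. avg F n -` {r<..}) \<in> sets borel" "(\<Union>n\<in>{N..}. avg F n -` {..<r}) \<in> sets borel" for N
    using 1 by (intro sets.countable_UN; blast)+
  have 3: "(\<Inter>N. \<Union>n\<in>{N..}. avg F n -` {r<..}) \<in> sets borel" "(\<Inter>N. \<Union>n\<in>{N..}. avg F n -` {..<r}) \<in> sets borel"
    using 2 by (intro sets.countable_INT; blast)+
  have 4: "F -` {..<r'} \<in> sets borel" "F -` {r'<..} \<in> sets borel"
    by (rule pre[OF Fm]; simp)+
  have "{x\<in>{0<..T}. F x < r' \<and> (\<exists>\<^sub>F n in sequentially. avg F n x > r)} =
      {0<..T} \<inter> F -` {..<r'} \<inter> (\<Inter>N. \<Union>n\<in>{N..}. avg F n -` {r<..})"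
    unfolding frequently_sequentially by (auto simp: Bex_def)
  also have "\<dots> \<in> sets borel"
    using 3 4 by (intro sets.Int) simp_all
  finally show "{x\<in>{0<..T}. F x < r' \<and> (\<exists>\<^sub>F n in sequentially. avg F n x > r)} \<in> sets borel" .
  have "{x\<in>{0<..T}. r' < F x \<and> (\<exists>\<^sub>F n in sequentially. avg F n x < r)} =
      {0<..T} \<inter> F -` {r'<..} \<inter> (\<Inter>N. \<Union>n\<in>{N..}. avg F n -` {..<r})"
    unfolding frequently_sequentially by (auto simp: Bex_def)
  also have "\<dots> \<in> sets borel"
    using 3 4 by (intro sets.Int) simp_all
  finally show "{x\<in>{0<..T}. r' < F x \<and> (\<exists>\<^sub>F n in sequentially. avg F n x < r)} \<in> sets borel" .
qed

abbreviation C :: "nat \<times> nat \<Rightarrow> real set" where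
  "C p \<equiv> {a (fst p) (snd p)<..b (fst p) (snd p)}"

lemma finite_dens:
  assumes F: "integrable lborel F" "\<And>x. 0 \<le> F x"
  shows "emeasure (density lborel (\<lambda>x. ennreal (F x))) (space (density lborel (\<lambda>x. ennreal (F x)))) \<noteq> \<infinity>"
proof -
  have Fm: "F \<in> borel_measurable lborel" using F(1) by auto
  have "emeasure (density lborel (\<lambda>x. ennreal (F x))) UNIV = (\<integral>\<^sup>+x. ennreal (F x) * indicator UNIV x \<partial>lborel)"
    using Fm by (intro emeasure_density) auto
  also have "\<dots> = (\<integral>\<^sup>+x. ennreal (F x) \<partial>lborel)" by simp
  also have "\<dots> = ennreal (\<integral>x. F x \<partial>lborel)"
    by (rule nn_integral_eq_integral) (use F in auto)
  finally show ?thesis by simp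
qed

lemma union_sets: "countable P \<Longrightarrow> (\<Union>(C ` P)) \<in> sets borel"
  by (intro sets.countable_UN') auto

lemma finite_E: "E \<subseteq> {0<..T} \<Longrightarrow> E \<in> sets borel \<Longrightarrow> emeasure lborel E = ennreal (measure lborel E)"
proof -
  assume "E \<subseteq> {0<..T}" "E \<in> sets borel"
  then have "emeasure lborel E \<le> emeasure lborel {0<..T}" by (intro emeasure_mono) auto
  also have "\<dots> = ennreal T" using Tpos by simp
  finally have "emeasure lborel E \<noteq> \<infinity>" by (auto simp: top_unique)
  then show ?thesis by (simp add: emeasure_eq_ennreal_measure)
qed

lemma ennreal_cancel:
  assumes "ennreal r * ennreal m \<le> ennreal r' * ennreal m" "r' < r" "0 \<le> r'" "0 \<le> m"
  shows "m = 0"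
proof -
  have "r * m \<le> r' * m" using assms
    by (simp add: ennreal_mult[symmetric] ennreal_le_iff)
  then have "(r - r') * m \<le> 0" by (simp add: algebra_simps)
  then show ?thesis using assms(2,4) by (simp add: mult_le_0_iff)
qed

lemma Eplus_null:
  assumes F: "integrable lborel F" "\<And>x. 0 \<le> F x" and rr: "r' < r"
  shows "{x\<in>{0<..T}. F x < r' \<and> (\<exists>\<^sub>F n in sequentially. avg F n x > r)} \<in> null_sets lborel"
proof -
  define E where "E = {x\<in>{0<..T}. F x < r' \<and> (\<exists>\<^sub>F n in sequentially. avg F n x > r)}"
  have Es: "E \<in> sets borel" using E_sets(1)[OF F(1)] by (simp add: E_def)
  have Esub: "E \<subseteq> {0<..T}" by (auto simp: E_def)
  show ?thesis
  proof (cases "E = {}")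
    case True then have "E \<in> null_sets lborel" by simp
    then show ?thesis by (simp add: E_def)
  next
    case False
    then obtain x0 where "x0 \<in> E" by blast
    then have r'pos: "0 < r'" using F(2)[of x0] by (auto simp: E_def)
    have rpos: "0 < r" using rr r'pos by simp
    define \<nu> where "\<nu> = density lborel (\<lambda>x. ennreal (F x))"
    have Fm: "F \<in> borel_measurable borel" by (rule F_borel[OF F(1)])
    have sets_\<nu>: "sets \<nu> = sets borel" by (simp add: \<nu>_def)
    have bound: "ennreal r * emeasure lborel E \<le> emeasure \<nu> U" if U: "open U" "E \<subseteq> U" for U
    proof -
      have Qx: "\<exists>\<^sub>F n in sequentially. ennreal r * emeasure lborel {a n (ci n x)<..b n (ci n x)} \<le> emeasure \<nu> {a n (ci n x)<..b n (ci n x)}"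
        if "x \<in> E" for x
      proof -
        from that have x0: "x \<in> {0<..T}" and fr: "\<exists>\<^sub>F n in sequentially. avg F n x > r" by (auto simp: E_def)
        show ?thesis using fr
        proof (rule frequently_elim1)
          fix n assume "avg F n x > r"
          moreover have lt0: "A n x < B n x" using ab_less[OF ci(1)[OF x0]] by simp
          ultimately have lt: "r * (B n x - A n x) < (\<integral>t\<in>{A n x..B n x}. F t \<partial>lborel)"
            using avg_eq[OF x0] by (simp add: pos_less_divide_eq mult.commute)
          have le: "A n x \<le> B n x" using lt0 by simp
          have "ennreal r * ennreal (B n x - A n x) = ennreal (r * (B n x - A n x))"
            using rpos le by (simp add: ennreal_mult)
          also have "\<dots> \<le> ennreal (\<integral>t\<in>{A n x..B n x}. F t \<partial>lborel)"
            using lt by (intro ennreal_leI) simp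
          finally show "ennreal r * emeasure lborel {A n x<..B n x} \<le> emeasure \<nu> {A n x<..B n x}"
            unfolding \<nu>_def dens_cell[OF F le] emeasure_lborel_Ioc[OF le] .
        qed
      qed
      obtain P where P: "countable P"
        "P \<subseteq> {(n,i). i<k n \<and> ennreal r * emeasure lborel {a n i<..b n i} \<le> emeasure \<nu> {a n i<..b n i} \<and> {a n i<..b n i} \<subseteq> U}"
        "disjoint_family_on C P" "E \<subseteq> \<Union>(C ` P)"
        by (rule cover[where Q="\<lambda>n i. ennreal r * emeasure lborel {a n i<..b n i} \<le> emeasure \<nu> {a n i<..b n i}", OF Esub U Qx]) blast+
      have Cs: "C p \<in> sets borel" for p by simp
      have "ennreal r * emeasure lborel E \<le> ennreal r * emeasure lborel (\<Union>(C`P))"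
        using union_sets[OF P(1)] P(4) by (intro mult_left_mono emeasure_mono) auto
      also have "\<dots> = ennreal r * (\<integral>\<^sup>+p. emeasure lborel (C p) \<partial>count_space P)"
        using emeasure_UN_countable[of P C lborel] P(1,3) by simp
      also have "\<dots> = (\<integral>\<^sup>+p. ennreal r * emeasure lborel (C p) \<partial>count_space P)"
        by (rule nn_integral_cmult[symmetric]) simp
      also have "\<dots> \<le> (\<integral>\<^sup>+p. emeasure \<nu> (C p) \<partial>count_space P)"
        using P(2) by (intro nn_integral_mono) auto
      also have "\<dots> = emeasure \<nu> (\<Union>(C`P))"
        using emeasure_UN_countable[of P C \<nu>] P(1,3) sets_\<nu> by simp
      also have "\<dots> \<le> emeasure \<nu> U"
      proof (rule emeasure_mono)
        show "\<Union>(C`P) \<subseteq> U"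
        proof
          fix y assume "y \<in> \<Union>(C`P)"
          then obtain p where p: "p \<in> P" "y \<in> C p" by blast
          then have "p \<in> {(n,i). i<k n \<and> ennreal r * emeasure lborel {a n i<..b n i} \<le> emeasure \<nu> {a n i<..b n i} \<and> {a n i<..b n i} \<subseteq> U}"
            using P(2) by blast
          then have "C p \<subseteq> U" by (cases p) simp
          then show "y \<in> U" using p(2) by blast
        qed
        show "U \<in> sets \<nu>" using U(1) sets_\<nu> by simp
      qed
      finally show ?thesis .
    qed
    have "emeasure \<nu> E = (INF U\<in>{U. E \<subseteq> U \<and> open U}. emeasure \<nu> U)"
      using outer_regular[OF sets_\<nu> _ Es] finite_dens[OF F] by (simp add: \<nu>_def)
    then have "ennreal r * emeasure lborel E \<le> emeasure \<nu> E"
      using bound by (simp add: le_INF_iff)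
    also have "emeasure \<nu> E = (\<integral>\<^sup>+x. ennreal (F x) * indicator E x \<partial>lborel)"
      unfolding \<nu>_def using Fm Es by (intro emeasure_density) auto
    also have "\<dots> \<le> (\<integral>\<^sup>+x. ennreal r' * indicator E x \<partial>lborel)"
      by (intro nn_integral_mono) (auto simp: E_def indicator_def intro: ennreal_leI)
    also have "\<dots> = ennreal r' * emeasure lborel E"
      using Es by (simp add: nn_integral_cmult_indicator)
    finally have "ennreal r * ennreal (measure lborel E) \<le> ennreal r' * ennreal (measure lborel E)"
      using finite_E[OF Esub Es] by simp
    then have "measure lborel E = 0" using rr r'pos by (intro ennreal_cancel) auto
    then have "emeasure lborel E = 0" using finite_E[OF Esub Es] by simp
    then have "E \<in> null_sets lborel" using Es by (simp add: null_sets_def)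
    then show ?thesis by (simp add: E_def)
  qed
qed

lemma emeasure_nu1:
  assumes "S \<in> sets borel" "0 \<le> r"
  shows "emeasure (density lborel (\<lambda>x. ennreal r * indicator {0..T} x)) S = ennreal r * emeasure lborel ({0..T} \<inter> S)"
proof -
  have "emeasure (density lborel (\<lambda>x. ennreal r * indicator {0..T} x)) S =
      (\<integral>\<^sup>+x. (ennreal r * indicator {0..T} x) * indicator S x \<partial>lborel)"
    using assms by (intro emeasure_density) auto
  also have "\<dots> = (\<integral>\<^sup>+x. ennreal r * indicator ({0..T} \<inter> S) x \<partial>lborel)"
    by (intro nn_integral_cong) (simp split: split_indicator)
  also have "\<dots> = ennreal r * emeasure lborel ({0..T} \<inter> S)"
    using assms by (intro nn_integral_cmult_indicator) auto
  finally show ?thesis .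
qed

lemma Eminus_null:
  assumes F: "integrable lborel F" "\<And>x. 0 \<le> F x" and rr: "r < r'"
  shows "{x\<in>{0<..T}. r' < F x \<and> (\<exists>\<^sub>F n in sequentially. avg F n x < r)} \<in> null_sets lborel"
proof -
  define E where "E = {x\<in>{0<..T}. r' < F x \<and> (\<exists>\<^sub>F n in sequentially. avg F n x < r)}"
  have Es: "E \<in> sets borel" using E_sets(2)[OF F(1)] by (simp add: E_def)
  have Esub: "E \<subseteq> {0<..T}" by (auto simp: E_def)
  show ?thesis
  proof (cases "E = {}")
    case True then have "E \<in> null_sets lborel" by simp
    then show ?thesis by (simp add: E_def)
  next
    case False
    then obtain x0 where x0E: "x0 \<in> E" by blast
    then have x00: "x0 \<in> {0<..T}" and "\<exists>\<^sub>F n in sequentially. avg F n x0 < r" by (auto simp: E_def)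
    then obtain n0 where "avg F n0 x0 < r" using frequently_ex by blast
    then have rpos: "0 < r" using avg_nonneg[of x0 F n0, OF x00 F(2)] by simp
    have r'pos: "0 < r'" using rr rpos by simp
    define \<nu> where "\<nu> = density lborel (\<lambda>x. ennreal (F x))"
    define \<nu>1 where "\<nu>1 = density lborel (\<lambda>x. ennreal r * indicator {0..T} x)"
    have Fm: "F \<in> borel_measurable borel" by (rule F_borel[OF F(1)])
    have sets_\<nu>: "sets \<nu> = sets borel" by (simp add: \<nu>_def)
    have sets_\<nu>1: "sets \<nu>1 = sets borel" by (simp add: \<nu>1_def)
    have fin1: "emeasure \<nu>1 (space \<nu>1) \<noteq> \<infinity>"
    proof -
      have "emeasure \<nu>1 UNIV = ennreal r * emeasure lborel ({0..T} \<inter> UNIV)"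
        unfolding \<nu>1_def using rpos by (intro emeasure_nu1) auto
      also have "\<dots> = ennreal r * ennreal T" using Tpos by simp
      finally show ?thesis by (simp add: \<nu>1_def ennreal_mult_eq_top_iff)
    qed
    have bound: "emeasure \<nu> E \<le> emeasure \<nu>1 U" if U: "open U" "E \<subseteq> U" for U
    proof -
      have Qx: "\<exists>\<^sub>F n in sequentially. emeasure \<nu> {a n (ci n x)<..b n (ci n x)} \<le> ennreal r * emeasure lborel {a n (ci n x)<..b n (ci n x)}"
        if "x \<in> E" for x
      proof -
        from that have x0: "x \<in> {0<..T}" and fr: "\<exists>\<^sub>F n in sequentially. avg F n x < r" by (auto simp: E_def)
        show ?thesis using fr
        proof (rule frequently_elim1)
          fix n assume "avg F n x < r"
          moreover have lt0: "A n x < B n x" using ab_less[OF ci(1)[OF x0]] by simp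
          ultimately have lt: "(\<integral>t\<in>{A n x..B n x}. F t \<partial>lborel) < r * (B n x - A n x)"
            using avg_eq[OF x0] by (simp add: divide_less_eq mult.commute)
          have le: "A n x \<le> B n x" using lt0 by simp
          have "ennreal (\<integral>t\<in>{A n x..B n x}. F t \<partial>lborel) \<le> ennreal (r * (B n x - A n x))"
            using lt by (intro ennreal_leI) simp
          also have "\<dots> = ennreal r * ennreal (B n x - A n x)"
            using rpos le by (simp add: ennreal_mult)
          finally show "emeasure \<nu> {A n x<..B n x} \<le> ennreal r * emeasure lborel {A n x<..B n x}"
            unfolding \<nu>_def dens_cell[OF F le] emeasure_lborel_Ioc[OF le] .
        qed
      qed
      obtain P where P: "countable P"
        "P \<subseteq> {(n,i). i<k n \<and> emeasure \<nu> {a n i<..b n i} \<le> ennreal r * emeasure lborel {a n i<..b n i} \<and> {a n i<..b n i} \<subseteq> U}"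
        "disjoint_family_on C P" "E \<subseteq> \<Union>(C ` P)"
        by (rule cover[where Q="\<lambda>n i. emeasure \<nu> {a n i<..b n i} \<le> ennreal r * emeasure lborel {a n i<..b n i}", OF Esub U Qx]) blast+
      have CU: "\<Union>(C`P) \<subseteq> U \<inter> {0<..T}"
      proof
        fix y assume "y \<in> \<Union>(C`P)"
        then obtain p where p: "p \<in> P" "y \<in> C p" by blast
        then have "p \<in> {(n,i). i<k n \<and> emeasure \<nu> {a n i<..b n i} \<le> ennreal r * emeasure lborel {a n i<..b n i} \<and> {a n i<..b n i} \<subseteq> U}"
          using P(2) by blast
        then have "C p \<subseteq> U \<inter> {0<..T}" using cell_sub by (cases p) auto
        then show "y \<in> U \<inter> {0<..T}" using p(2) by blast
      qed
      have "emeasure \<nu> E \<le> emeasure \<nu> (\<Union>(C`P))"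
        using union_sets[OF P(1)] P(4) sets_\<nu> by (intro emeasure_mono) auto
      also have "\<dots> = (\<integral>\<^sup>+p. emeasure \<nu> (C p) \<partial>count_space P)"
        using emeasure_UN_countable[of P C \<nu>] P(1,3) sets_\<nu> by simp
      also have "\<dots> \<le> (\<integral>\<^sup>+p. ennreal r * emeasure lborel (C p) \<partial>count_space P)"
        using P(2) by (intro nn_integral_mono) auto
      also have "\<dots> = ennreal r * (\<integral>\<^sup>+p. emeasure lborel (C p) \<partial>count_space P)"
        by (rule nn_integral_cmult) simp
      also have "\<dots> = ennreal r * emeasure lborel (\<Union>(C`P))"
        using emeasure_UN_countable[of P C lborel] P(1,3) by simp
      also have "\<dots> = emeasure \<nu>1 (\<Union>(C`P))"
      proof -
        have "{0..T} \<inter> \<Union>(C`P) = \<Union>(C`P)" using CU by auto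
        then show ?thesis unfolding \<nu>1_def using emeasure_nu1[OF union_sets[OF P(1)]] rpos by simp
      qed
      also have "\<dots> \<le> emeasure \<nu>1 U"
        using CU U(1) sets_\<nu>1 by (intro emeasure_mono) auto
      finally show ?thesis .
    qed
    have "emeasure \<nu>1 E = (INF U\<in>{U. E \<subseteq> U \<and> open U}. emeasure \<nu>1 U)"
      using outer_regular[OF sets_\<nu>1 fin1 Es] .
    then have "emeasure \<nu> E \<le> emeasure \<nu>1 E"
      using bound by (simp add: le_INF_iff)
    also have "\<dots> = ennreal r * emeasure lborel E"
    proof -
      have "{0..T} \<inter> E = E" using Esub by auto
      then show ?thesis unfolding \<nu>1_def using emeasure_nu1[OF Es] rpos by simp
    qed
    finally have up: "emeasure \<nu> E \<le> ennreal r * emeasure lborel E" .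
    have "ennreal r' * emeasure lborel E = (\<integral>\<^sup>+x. ennreal r' * indicator E x \<partial>lborel)"
      using Es by (simp add: nn_integral_cmult_indicator)
    also have "\<dots> \<le> (\<integral>\<^sup>+x. ennreal (F x) * indicator E x \<partial>lborel)"
      by (intro nn_integral_mono) (auto simp: E_def indicator_def intro: ennreal_leI)
    also have "\<dots> = emeasure \<nu> E"
      unfolding \<nu>_def using Fm Es by (intro emeasure_density[symmetric]) auto
    finally have "ennreal r' * ennreal (measure lborel E) \<le> ennreal r * ennreal (measure lborel E)"
      using up finite_E[OF Esub Es] by simp
    then have "measure lborel E = 0" using rr rpos by (intro ennreal_cancel) auto
    then have "emeasure lborel E = 0" using finite_E[OF Esub Es] by simp
    then have "E \<in> null_sets lborel" using Es by (simp add: null_sets_def)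
    then show ?thesis by (simp add: E_def)
  qed
qed

theorem diff:
  assumes F: "integrable lborel F" "\<And>x. 0 \<le> F x"
  shows "AE x in lborel. x \<in> {0<..T} \<longrightarrow> (\<lambda>n. avg F n x) \<longlonglongrightarrow> F x"
proof -
  define Ep where "Ep p = {x\<in>{0<..T}. F x < fst p \<and> (\<exists>\<^sub>F n in sequentially. avg F n x > snd p)}" for p :: "real \<times> real"
  define Em where "Em p = {x\<in>{0<..T}. snd p < F x \<and> (\<exists>\<^sub>F n in sequentially. avg F n x < fst p)}" for p :: "real \<times> real"
  define I where "I = (\<rat> \<times> \<rat>) \<inter> {p::real\<times>real. fst p < snd p}"
  have cI: "countable I" unfolding I_def
    by (intro countable_Int1 countable_SIGMA countable_rat)
  have "(\<Union>p\<in>I. Ep p \<union> Em p) \<in> null_sets lborel"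
  proof (rule null_sets_UN'[OF cI])
    fix p assume "p \<in> I"
    then have lt: "fst p < snd p" by (simp add: I_def)
    show "Ep p \<union> Em p \<in> null_sets lborel"
      unfolding Ep_def Em_def
      using Eplus_null[OF F lt] Eminus_null[OF F lt] by (rule null_sets.Un)
  qed
  then show ?thesis
  proof (rule AE_I')
    show "{x \<in> space lborel. \<not> (x \<in> {0<..T} \<longrightarrow> (\<lambda>n. avg F n x) \<longlonglongrightarrow> F x)} \<subseteq> (\<Union>p\<in>I. Ep p \<union> Em p)"
    proof (rule subsetI)
      fix x assume "x \<in> {x \<in> space lborel. \<not> (x \<in> {0<..T} \<longrightarrow> (\<lambda>n. avg F n x) \<longlonglongrightarrow> F x)}"
      then have x: "x \<in> {0<..T}" and nt: "\<not> (\<lambda>n. avg F n x) \<longlonglongrightarrow> F x" by auto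
      obtain e where e: "e > 0" "\<not> eventually (\<lambda>n. dist (avg F n x) (F x) < e) sequentially"
        using nt tendsto_iff by blast
      then have "\<exists>\<^sub>F n in sequentially. \<not> dist (avg F n x) (F x) < e"
        by (simp add: not_eventually)
      then have "\<exists>\<^sub>F n in sequentially. F x + e \<le> avg F n x \<or> avg F n x \<le> F x - e"
        by (rule frequently_elim1) (auto simp: dist_real_def)
      then consider "\<exists>\<^sub>F n in sequentially. F x + e \<le> avg F n x" | "\<exists>\<^sub>F n in sequentially. avg F n x \<le> F x - e"
        using frequently_disj_iff by blast
      then show "x \<in> (\<Union>p\<in>I. Ep p \<union> Em p)"
      proof cases
        case 1
        obtain u where u: "u \<in> \<rat>" "F x < u" "u < F x + e" using Rats_dense_in_real[of "F x" "F x + e"] e(1) by auto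
        obtain v where v: "v \<in> \<rat>" "u < v" "v < F x + e" using Rats_dense_in_real[OF u(3)] by auto
        have "\<exists>\<^sub>F n in sequentially. avg F n x > v" using 1 by (rule frequently_elim1) (use v in auto)
        then have "x \<in> Ep (u, v)" using x u by (simp add: Ep_def)
        moreover have "(u, v) \<in> I" using u v by (simp add: I_def)
        ultimately show ?thesis by blast
      next
        case 2
        obtain u where u: "u \<in> \<rat>" "F x - e < u" "u < F x" using Rats_dense_in_real[of "F x - e" "F x"] e(1) by auto
        obtain v where v: "v \<in> \<rat>" "u < v" "v < F x" using Rats_dense_in_real[OF u(3)] by auto
        have "\<exists>\<^sub>F n in sequentially. avg F n x < u" using 2 by (rule frequently_elim1) (use u in auto)
        then have "x \<in> Em (u, v)" using x v by (simp add: Em_def)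
        moreover have "(u, v) \<in> I" using u v by (simp add: I_def)
        ultimately show ?thesis by blast
      qed
    qed
  qed
qed

end


lemma one_minus_exp_lim: "((\<lambda>y::real. (1 - exp (- y)) / y) \<longlongrightarrow> 1) (at 0)"
proof -
  have "((\<lambda>y::real. 1 - exp (- y)) has_real_derivative 1) (at 0)"
    by (auto intro!: derivative_eq_intros)
  then show ?thesis by (simp add: has_field_derivative_iff)
qed

lemma abstract_lim:
  fixes len I J q :: "nat \<Rightarrow> real"
  assumes len: "\<And>n. 0 < len n" "len \<longlonglongrightarrow> 0"
    and q: "(\<lambda>n. I n / len n) \<longlonglongrightarrow> L" and I: "\<And>n. 0 \<le> I n" and J: "J \<longlonglongrightarrow> 0" and L: "0 \<le> L"
  shows "(\<lambda>n. nlog (1 - exp (- I n)) + ereal (ln (len n) - J n)) \<longlonglongrightarrow> nlog L"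
proof -
  have Ieq: "I n = (I n / len n) * len n" for n using len(1)[of n] by simp
  have eqI: "(\<lambda>n. I n / len n * len n) = I"
  proof
    fix n show "I n / len n * len n = I n" using len(1)[of n] by simp
  qed
  have I0: "I \<longlonglongrightarrow> 0"
    using tendsto_mult[OF q len(2)] unfolding eqI by simp
  show ?thesis
  proof (cases "L = 0")
    case False
    then have Lpos: "0 < L" using L by simp
    have evq: "eventually (\<lambda>n. I n / len n > 0) sequentially"
      using q Lpos by (rule order_tendstoD)
    then have evI: "eventually (\<lambda>n. I n > 0) sequentially"
    proof eventually_elim
      case (elim n) then show ?case using len(1)[of n] by (simp add: zero_less_divide_iff)
    qed
    have Iat: "filterlim I (at 0) sequentially"
      using I0 evI by (intro filterlim_atI) (auto elim: eventually_mono)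
    have r: "(\<lambda>n. (1 - exp (- I n)) / I n) \<longlonglongrightarrow> 1"
      using filterlim_compose[OF one_minus_exp_lim Iat] by simp
    have lim: "(\<lambda>n. - ln ((1 - exp (- I n)) / I n * (I n / len n)) - J n) \<longlonglongrightarrow> - ln (1 * L) - 0"
      by (intro tendsto_intros r q J) (use Lpos in simp)
    have ev: "eventually (\<lambda>n. ereal (- ln ((1 - exp (- I n)) / I n * (I n / len n)) - J n) =
        nlog (1 - exp (- I n)) + ereal (ln (len n) - J n)) sequentially"
      using evI
    proof eventually_elim
      case (elim n)
      have pos: "0 < 1 - exp (- I n)" using elim by simp
      have "(1 - exp (- I n)) / I n * (I n / len n) = (1 - exp (- I n)) / len n"
        using elim by simp
      then have "ln ((1 - exp (- I n)) / I n * (I n / len n)) = ln (1 - exp (- I n)) - ln (len n)"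
        using pos len(1)[of n] by (simp add: ln_div)
      then show ?case using pos by (simp add: nlog_def)
    qed
    have "(\<lambda>n. nlog (1 - exp (- I n)) + ereal (ln (len n) - J n)) \<longlonglongrightarrow> ereal (- ln (1 * L) - 0)"
      by (rule Lim_transform_eventually[OF tendsto_ereal[OF lim] ev])
    then show ?thesis using Lpos by (simp add: nlog_def)
  next
    case True
    have "(\<lambda>n. nlog (1 - exp (- I n)) + ereal (ln (len n) - J n)) \<longlonglongrightarrow> \<infinity>"
    proof (rule tendsto_PInfty[THEN iffD2], intro allI)
      fix r :: real
      have e1: "eventually (\<lambda>n. I n / len n < exp (- (r + 1))) sequentially"
        using q True by (intro order_tendstoD) auto
      have e2: "eventually (\<lambda>n. J n < 1) sequentially"
        using J by (intro order_tendstoD) auto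
      show "eventually (\<lambda>n. ereal r < nlog (1 - exp (- I n)) + ereal (ln (len n) - J n)) sequentially"
        using e1 e2
      proof eventually_elim
        case (elim n)
        show ?case
        proof (cases "I n = 0")
          case True then show ?thesis by (simp add: nlog_def)
        next
          case False
          then have Ipos: "0 < I n" using I[of n] by simp
          have qpos: "0 < I n / len n" using Ipos len(1)[of n] by simp
          have p: "0 < 1 - exp (- I n)" using Ipos by simp
          have pI: "1 - exp (- I n) \<le> I n" using exp_ge_add_one_self[of "- I n"] by simp
          have "ln (I n / len n) < ln (exp (- (r + 1)))"
            using elim(1) qpos by (subst ln_less_cancel_iff) auto
          then have "ln (I n / len n) < - (r + 1)" by simp
          then have "r < - ln (I n / len n) - J n" using elim(2) by simp
          also have "- ln (I n / len n) = - ln (I n) + ln (len n)"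
            using Ipos len(1)[of n] by (simp add: ln_div)
          also have "- ln (I n) \<le> - ln (1 - exp (- I n))"
            using pI p by simp
          finally have "r < - ln (1 - exp (- I n)) + (ln (len n) - J n)" by simp
          then show ?thesis using p by (simp add: nlog_def)
        qed
      qed
    qed
    then show ?thesis using True by (simp add: nlog_def)
  qed
qed


context dis
begin

lemma set_int_borel: "set_integrable lborel S (f::real\<Rightarrow>real) \<Longrightarrow> set_borel_measurable lborel S f"
  unfolding set_integrable_def set_borel_measurable_def by (rule borel_measurable_integrable)

lemma set_int_borel_old: "set_integrable lborel S f \<Longrightarrow> set_borel_measurable lborel S f"
  unfolding set_integrable_def set_borel_measurable_def by (rule borel_measurable_integrable)

lemma set_int_Icc_Ioc:
  fixes f :: "real \<Rightarrow> real"
  assumes "set_integrable lborel {l..u} f"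
  shows "(\<integral>t\<in>{l..u}. f t \<partial>lborel) = (\<integral>t\<in>{l<..u}. f t \<partial>lborel)"
proof (rule set_integral_cong_set)
  show "set_borel_measurable lborel {l..u} f" using set_int_borel[OF assms] .
  show "set_borel_measurable lborel {l<..u} f"
    by (rule set_int_borel[OF set_integrable_subset[OF assms]]) auto
  show "AE x in lborel. (x \<in> {l<..u}) = (x \<in> {l..u})"
    using AE_lborel_singleton[of l] by eventually_elim auto
qed

lemma additivity:
  fixes f :: "real \<Rightarrow> real"
  assumes f: "set_integrable lborel {0..T} f"
  shows "(\<integral>t\<in>{0..T}. f t \<partial>lborel) = (\<Sum>i<k n. \<integral>t\<in>{a n i..b n i}. f t \<partial>lborel)"
proof -
  have sub: "set_integrable lborel S f" if "S \<subseteq> {0..T}" "S \<in> sets borel" for S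
    using set_integrable_subset[OF f] that by auto
  have cells: "{a n i<..b n i} \<subseteq> {0..T}" "{a n i..b n i} \<subseteq> {0..T}" if "i < k n" for i
    using cell_sub[OF that] a_ge[OF that] b_le[OF that] by auto
  have U: "(\<integral>t\<in>(\<Union>i\<in>I. {a n i<..b n i}). f t \<partial>lborel) = (\<Sum>i\<in>I. \<integral>t\<in>{a n i<..b n i}. f t \<partial>lborel)"
    if "finite I" "I \<subseteq> {..<k n}" for I
    using that
  proof (induction I rule: finite_induct)
    case empty then show ?case by (simp add: set_lebesgue_integral_def)
  next
    case (insert j I)
    have j: "j < k n" using insert by auto
    have disj': "{a n j<..b n j} \<inter> (\<Union>i\<in>I. {a n i<..b n i}) = {}"
    proof (rule ccontr)
      assume "{a n j<..b n j} \<inter> (\<Union>i\<in>I. {a n i<..b n i}) \<noteq> {}"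
      then obtain x i where xi: "i \<in> I" "x \<in> {a n j<..b n j}" "x \<in> {a n i<..b n i}" by blast
      have ik: "i < k n" using xi(1) insert.prems by auto
      have "j = i" using disj[OF j ik xi(2,3)] .
      then show False using insert.hyps(2) xi(1) by simp
    qed
    have "(\<integral>t\<in>(\<Union>i\<in>insert j I. {a n i<..b n i}). f t \<partial>lborel) =
        (\<integral>t\<in>{a n j<..b n j} \<union> (\<Union>i\<in>I. {a n i<..b n i}). f t \<partial>lborel)" by simp
    also have "\<dots> = (\<integral>t\<in>{a n j<..b n j}. f t \<partial>lborel) + (\<integral>t\<in>(\<Union>i\<in>I. {a n i<..b n i}). f t \<partial>lborel)"
    proof (rule set_integral_Un[OF disj'])
      show "set_integrable lborel {a n j<..b n j} f" using sub cells(1)[OF j] by simp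
      show "set_integrable lborel (\<Union>i\<in>I. {a n i<..b n i}) f"
        using insert cells(1) by (intro sub) auto
    qed
    finally show ?case using insert by simp
  qed
  have "(\<integral>t\<in>{0..T}. f t \<partial>lborel) = (\<integral>t\<in>{0<..T}. f t \<partial>lborel)"
    by (rule set_int_Icc_Ioc[OF f])
  also have "{0<..T} = (\<Union>i\<in>{..<k n}. {a n i<..b n i})"
    using part[of n] unfolding interval_partition_def by simp
  also have "(\<integral>t\<in>(\<Union>i\<in>{..<k n}. {a n i<..b n i}). f t \<partial>lborel) = (\<Sum>i<k n. \<integral>t\<in>{a n i<..b n i}. f t \<partial>lborel)"
    by (rule U) auto
  also have "\<dots> = (\<Sum>i<k n. \<integral>t\<in>{a n i..b n i}. f t \<partial>lborel)"
    by (intro sum.cong refl set_int_Icc_Ioc[symmetric] sub) (use cells in auto)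
  finally show ?thesis .
qed

end

locale det = dis +
  fixes lam :: "real \<Rightarrow> real list \<Rightarrow> real" and \<phi> :: "real set"
  assumes CI: "conditional_intensity T lam"
    and fin: "finite \<phi>" and sub: "\<phi> \<subseteq> {0<..<T}"
    and noend: "\<And>n i t. t \<in> \<phi> \<Longrightarrow> t \<noteq> a n i"
    and good: "\<And>t. t \<in> \<phi> \<Longrightarrow> (\<lambda>n. avg (\<lambda>s. lam s (hist \<phi> t)) n t) \<longlonglongrightarrow> lam t (hist \<phi> t)"
begin

lemma hist_set: "set (hist \<phi> u) = {s\<in>\<phi>. s < u}"
  unfolding hist_def using fin by simp

lemma hist_sorted: "sorted_wrt (<) (hist \<phi> u)"
  unfolding hist_def by (rule strict_sorted_list_of_set)

lemma lam_nonneg_sorted: "sorted_wrt (<) H \<Longrightarrow> 0 \<le> lam t H"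
  using CI unfolding conditional_intensity_def by blast

lemma lam_int_sorted: "sorted_wrt (<) H \<Longrightarrow> set H \<subseteq> {0..T} \<Longrightarrow> set_integrable lborel {0..T} (\<lambda>t. lam t H)"
  using CI unfolding conditional_intensity_def by blast

lemma lam_nonneg: "0 \<le> lam t (hist \<phi> u)"
  by (rule lam_nonneg_sorted[OF hist_sorted])

lemma lam_int: "set_integrable lborel {0..T} (\<lambda>t. lam t (hist \<phi> u))"
  by (rule lam_int_sorted[OF hist_sorted]) (use hist_set sub in auto)

definition g :: "real \<Rightarrow> real" where "g u = lam u (hist \<phi> u)"

lemma S_sets: "{u::real. {s\<in>\<phi>. s < u} = X} \<in> sets borel"
proof -
  have "{u::real. {s\<in>\<phi>. s < u} = X} = (if X \<subseteq> \<phi> then {u. (\<forall>s\<in>X. s < u) \<and> (\<forall>s\<in>\<phi>-X. u \<le> s)} else {})"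
  proof (cases "X \<subseteq> \<phi>")
    case True
    have "{s\<in>\<phi>. s < u} = X \<longleftrightarrow> (\<forall>s\<in>X. s < u) \<and> (\<forall>s\<in>\<phi>-X. u \<le> s)" for u
    proof
      assume "{s\<in>\<phi>. s < u} = X" then show "(\<forall>s\<in>X. s < u) \<and> (\<forall>s\<in>\<phi>-X. u \<le> s)" by auto
    next
      assume *: "(\<forall>s\<in>X. s < u) \<and> (\<forall>s\<in>\<phi>-X. u \<le> s)"
      show "{s\<in>\<phi>. s < u} = X"
      proof (intro set_eqI iffI)
        fix s assume "s \<in> {s\<in>\<phi>. s < u}"
        then show "s \<in> X" using * by (metis (mono_tags, lifting) DiffI mem_Collect_eq not_le)
      next
        fix s assume "s \<in> X" then show "s \<in> {s\<in>\<phi>. s < u}" using * True by auto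
      qed
    qed
    then show ?thesis using True by simp
  qed auto
  moreover have "Measurable.pred borel (\<lambda>u::real. (\<forall>s\<in>X. s < u) \<and> (\<forall>s\<in>\<phi>-X. u \<le> s))" if "X \<subseteq> \<phi>"
  proof (intro pred_intros_logic pred_intros_finite)
    show "finite X" using that fin by (rule finite_subset)
    show "finite (\<phi> - X)" using fin by simp
  qed simp_all
  ultimately show ?thesis by (simp add: pred_def)
qed

lemma g_int: "set_integrable lborel {0..T} g"
proof -
  define S where "S X = {u::real. {s\<in>\<phi>. s < u} = X}" for X
  have eq: "indicator {0..T} u *\<^sub>R g u =
      (\<Sum>X\<in>Pow \<phi>. indicator (S X) u *\<^sub>R (indicator {0..T} u *\<^sub>R lam u (sorted_list_of_set X)))" for u
  proof -
    have "(\<Sum>X\<in>Pow \<phi>. indicator (S X) u *\<^sub>R (indicator {0..T} u *\<^sub>R lam u (sorted_list_of_set X))) =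
        (\<Sum>X\<in>Pow \<phi>. if X = {s\<in>\<phi>. s < u} then indicator {0..T} u *\<^sub>R lam u (sorted_list_of_set X) else 0)"
      by (intro sum.cong refl) (auto simp: S_def indicator_def)
    also have "\<dots> = indicator {0..T} u *\<^sub>R g u"
      by (subst sum.delta) (auto simp: fin g_def hist_def)
    finally show ?thesis by simp
  qed
  have int1: "integrable lborel (\<lambda>u. indicator (S X) u *\<^sub>R (indicator {0..T} u *\<^sub>R lam u (sorted_list_of_set X)))"
    if X: "X \<in> Pow \<phi>" for X
  proof (rule integrable_mult_indicator)
    show "S X \<in> sets lborel" using S_sets by (simp add: S_def)
    have "finite X" using X fin finite_subset by auto
    moreover have "X \<subseteq> {0..T}" using X sub by auto
    ultimately show "integrable lborel (\<lambda>u. indicator {0..T} u *\<^sub>R lam u (sorted_list_of_set X))"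
      using lam_int_sorted[of "sorted_list_of_set X"] unfolding set_integrable_def by auto
  qed
  have "integrable lborel (\<lambda>u. \<Sum>X\<in>Pow \<phi>. indicator (S X) u *\<^sub>R (indicator {0..T} u *\<^sub>R lam u (sorted_list_of_set X)))"
    using int1 by (rule Bochner_Integration.integrable_sum)
  then show ?thesis unfolding set_integrable_def eq .
qed

lemma sepd: assumes t: "t \<in> \<phi>"
  shows "eventually (\<lambda>n. \<forall>s\<in>\<phi>-{t}. s \<notin> {A n t<..B n t}) sequentially"
proof -
  have "\<forall>s\<in>\<phi>-{t}. eventually (\<lambda>n. s \<notin> {A n t<..B n t}) sequentially"
  proof
    fix s assume s: "s \<in> \<phi> - {t}"
    have "t \<in> {0<..T}" "s \<in> {0<..T}" using t s sub by auto
    then obtain N where "\<forall>n\<ge>N. s \<notin> {A n t<..B n t}" using sep[of t s] s by auto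
    then show "eventually (\<lambda>n. s \<notin> {A n t<..B n t}) sequentially"
      unfolding eventually_sequentially by blast
  qed
  then show ?thesis using fin by (intro eventually_ball_finite) auto
qed

lemma t0: "t \<in> \<phi> \<Longrightarrow> t \<in> {0<..T}" using sub by auto

lemma hist_cell: assumes t: "t \<in> \<phi>" and sp: "\<forall>s\<in>\<phi>-{t}. s \<notin> {A n t<..B n t}"
  shows "hist \<phi> (A n t) = hist \<phi> t"
proof -
  have c: "A n t < t" "t \<le> B n t" using in_cell[OF t0[OF t]] by auto
  have "{s\<in>\<phi>. s < A n t} = {s\<in>\<phi>. s < t}"
  proof (intro set_eqI iffI)
    fix s assume "s \<in> {s\<in>\<phi>. s < A n t}" then show "s \<in> {s\<in>\<phi>. s < t}" using c by auto
  next
    fix s assume s: "s \<in> {s\<in>\<phi>. s < t}"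
    have "s \<noteq> A n t" using noend s by auto
    moreover have "\<not> (A n t < s)"
    proof
      assume "A n t < s"
      then have "s \<in> {A n t<..B n t}" using s c by auto
      then show False using sp s by auto
    qed
    ultimately show "s \<in> {s\<in>\<phi>. s < A n t}" using s by auto
  qed
  then show ?thesis by (simp add: hist_def)
qed

lemma hist_empty: assumes i: "i < k n" and e: "\<phi> \<inter> {a n i<..b n i} = {}" and u: "u \<in> {a n i<..b n i}"
  shows "hist \<phi> u = hist \<phi> (a n i)"
proof -
  have "{s\<in>\<phi>. s < u} = {s\<in>\<phi>. s < a n i}"
  proof (intro set_eqI iffI)
    fix s assume s: "s \<in> {s\<in>\<phi>. s < u}"
    have "s \<notin> {a n i<..b n i}" using e s by auto
    moreover have "s \<noteq> a n i" using noend s by auto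
    ultimately show "s \<in> {s\<in>\<phi>. s < a n i}" using s u by auto
  next
    fix s assume "s \<in> {s\<in>\<phi>. s < a n i}" then show "s \<in> {s\<in>\<phi>. s < u}" using u by auto
  qed
  then show ?thesis by (simp add: hist_def)
qed

lemma cells_sub: assumes "i < k n" shows "{a n i..b n i} \<subseteq> {0..T}"
  using a_ge[OF assms] b_le[OF assms] by auto

lemma int_sub: assumes "set_integrable lborel {0..T} (f::real\<Rightarrow>real)" "i < k n"
  shows "set_integrable lborel {a n i..b n i} f"
  by (rule set_integrable_subset[OF assms(1)]) (use cells_sub[OF assms(2)] in auto)

definition Iv :: "nat \<Rightarrow> nat \<Rightarrow> real" where
  "Iv n i = (\<integral>t\<in>{a n i..b n i}. lam t (hist \<phi> (a n i)) \<partial>lborel)"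

lemma p_int_Iv: "p_int lam \<phi> (a n i) (b n i) = 1 - exp (- Iv n i)"
  by (simp add: p_int_def Iv_def)

lemma Iv_empty: assumes i: "i < k n" and e: "\<phi> \<inter> {a n i<..b n i} = {}"
  shows "Iv n i = (\<integral>t\<in>{a n i..b n i}. g t \<partial>lborel)"
proof -
  have "Iv n i = (\<integral>t\<in>{a n i<..b n i}. lam t (hist \<phi> (a n i)) \<partial>lborel)"
    unfolding Iv_def by (rule set_int_Icc_Ioc[OF int_sub[OF lam_int i]])
  also have "\<dots> = (\<integral>t\<in>{a n i<..b n i}. g t \<partial>lborel)"
    by (rule set_lebesgue_integral_cong) (use hist_empty[OF i e] in \<open>auto simp: g_def\<close>)
  also have "\<dots> = (\<integral>t\<in>{a n i..b n i}. g t \<partial>lborel)"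
    by (rule set_int_Icc_Ioc[OF int_sub[OF g_int i], symmetric])
  finally show ?thesis .
qed

end


lemma ereal_alg: "ereal (G - J) + (X + ereal l) = (X + ereal (l - J)) + ereal G"
  by (cases X) auto

context det
begin

definition LHS :: "nat \<Rightarrow> ereal" where
  "LHS n = S_int (k n) (a n) (b n) (\<lambda>i. p_int lam \<phi> (a n i) (b n i)) \<phi>
                 + ereal (\<Sum>i<k n. if card (\<phi> \<inter> {a n i<..b n i}) > 0 then ln (b n i - a n i) else 0)"

lemma nlog_exp: "nlog (exp (- x)) = ereal x"
  by (simp add: nlog_def)

lemma decomp:
  assumes EV: "\<forall>t\<in>\<phi>. \<forall>s\<in>\<phi>-{t}. s \<notin> {A n t<..B n t}"
  shows "LHS n = (\<Sum>t\<in>\<phi>. nlog (1 - exp (- Iv n (ci n t))) + ereal (ln (B n t - A n t) - (\<integral>s\<in>{A n t..B n t}. g s \<partial>lborel)))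
                 + ereal (\<integral>s\<in>{0..T}. g s \<partial>lborel)"
proof -
  define NE where "NE = ci n ` \<phi>"
  define EM where "EM = {..<k n} - NE"
  define w where "w i = (if \<phi> \<inter> {a n i<..b n i} \<noteq> {} then nlog (1 - exp (- Iv n i)) + ereal (ln (b n i - a n i))
      else ereal (Iv n i))" for i
  define J where "J t = (\<integral>s\<in>{A n t..B n t}. g s \<partial>lborel)" for t
  define G where "G = (\<integral>s\<in>{0..T}. g s \<partial>lborel)"
  have NEsub: "NE \<subseteq> {..<k n}" using ci(1)[OF t0] by (auto simp: NE_def)
  have inj: "inj_on (ci n) \<phi>"
  proof (rule inj_onI)
    fix s t assume st: "s \<in> \<phi>" "t \<in> \<phi>" "ci n s = ci n t"
    have "s \<in> {A n t<..B n t}" using ci(2)[OF t0[OF st(1)], of n] st(3) by simp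
    then show "s = t" using EV st(1,2) by blast
  qed
  have ne_iff: "(\<phi> \<inter> {a n i<..b n i} \<noteq> {}) \<longleftrightarrow> i \<in> NE" if i: "i < k n" for i
  proof
    assume "\<phi> \<inter> {a n i<..b n i} \<noteq> {}"
    then obtain t where t: "t \<in> \<phi>" "t \<in> {a n i<..b n i}" by blast
    then have "ci n t = i" using ci_eq[OF i] by blast
    then show "i \<in> NE" using t by (auto simp: NE_def)
  next
    assume "i \<in> NE"
    then obtain t where t: "t \<in> \<phi>" "i = ci n t" by (auto simp: NE_def)
    then show "\<phi> \<inter> {a n i<..b n i} \<noteq> {}" using ci(2)[OF t0[OF t(1)], of n] by auto
  qed
  have card_iff: "(card (\<phi> \<inter> S) > 0) \<longleftrightarrow> (\<phi> \<inter> S \<noteq> {})" for S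
    using fin by (simp add: card_gt_0_iff)
  have step1: "LHS n = (\<Sum>i<k n. w i)"
  proof -
    have "LHS n = (\<Sum>i<k n. (if card (\<phi> \<inter> {a n i<..b n i}) > 0 then nlog (p_int lam \<phi> (a n i) (b n i)) else nlog (1 - p_int lam \<phi> (a n i) (b n i)))
        + ereal (if card (\<phi> \<inter> {a n i<..b n i}) > 0 then ln (b n i - a n i) else 0))"
      unfolding LHS_def S_int_def sum_ereal[symmetric] sum.distrib ..
    also have "\<dots> = (\<Sum>i<k n. w i)"
      by (intro sum.cong refl) (simp add: w_def card_iff p_int_Iv nlog_exp)
    finally show ?thesis .
  qed
  have step2: "(\<Sum>i<k n. w i) = (\<Sum>i\<in>EM. w i) + (\<Sum>i\<in>NE. w i)"
    unfolding EM_def using NEsub by (intro sum.subset_diff) auto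
  have step3: "(\<Sum>i\<in>EM. w i) = ereal (\<Sum>i\<in>EM. \<integral>s\<in>{a n i..b n i}. g s \<partial>lborel)"
  proof -
    have "(\<Sum>i\<in>EM. w i) = (\<Sum>i\<in>EM. ereal (\<integral>s\<in>{a n i..b n i}. g s \<partial>lborel))"
    proof (intro sum.cong refl)
      fix i assume i: "i \<in> EM"
      then have ik: "i < k n" and e: "\<phi> \<inter> {a n i<..b n i} = {}" using ne_iff by (auto simp: EM_def)
      show "w i = ereal (\<integral>s\<in>{a n i..b n i}. g s \<partial>lborel)"
        using e Iv_empty[OF ik e] by (simp add: w_def)
    qed
    then show ?thesis by simp
  qed
  have step4: "(\<Sum>i\<in>NE. w i) = (\<Sum>t\<in>\<phi>. nlog (1 - exp (- Iv n (ci n t))) + ereal (ln (B n t - A n t)))"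
  proof -
    have "(\<Sum>i\<in>NE. w i) = (\<Sum>t\<in>\<phi>. w (ci n t))"
      unfolding NE_def by (rule sum.reindex[OF inj, unfolded comp_def])
    also have "\<dots> = (\<Sum>t\<in>\<phi>. nlog (1 - exp (- Iv n (ci n t))) + ereal (ln (B n t - A n t)))"
    proof (intro sum.cong refl)
      fix t assume t: "t \<in> \<phi>"
      have "\<phi> \<inter> {A n t<..B n t} \<noteq> {}" using ci(2)[OF t0[OF t], of n] t by auto
      then show "w (ci n t) = nlog (1 - exp (- Iv n (ci n t))) + ereal (ln (B n t - A n t))"
        by (simp add: w_def)
    qed
    finally show ?thesis .
  qed
  have step5: "G = (\<Sum>i\<in>EM. \<integral>s\<in>{a n i..b n i}. g s \<partial>lborel) + (\<Sum>t\<in>\<phi>. J t)"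
  proof -
    have "G = (\<Sum>i<k n. \<integral>s\<in>{a n i..b n i}. g s \<partial>lborel)"
      unfolding G_def by (rule additivity[OF g_int])
    also have "\<dots> = (\<Sum>i\<in>EM. \<integral>s\<in>{a n i..b n i}. g s \<partial>lborel) + (\<Sum>i\<in>NE. \<integral>s\<in>{a n i..b n i}. g s \<partial>lborel)"
      unfolding EM_def using NEsub by (intro sum.subset_diff) auto
    also have "(\<Sum>i\<in>NE. \<integral>s\<in>{a n i..b n i}. g s \<partial>lborel) = (\<Sum>t\<in>\<phi>. J t)"
      unfolding NE_def J_def by (rule sum.reindex[OF inj, unfolded comp_def])
    finally show ?thesis .
  qed
  have "LHS n = ereal (G - (\<Sum>t\<in>\<phi>. J t)) + ((\<Sum>t\<in>\<phi>. nlog (1 - exp (- Iv n (ci n t)))) + ereal (\<Sum>t\<in>\<phi>. ln (B n t - A n t)))"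
    using step1 step2 step3 step4 step5 by (simp add: sum.distrib)
  also have "\<dots> = ((\<Sum>t\<in>\<phi>. nlog (1 - exp (- Iv n (ci n t)))) + ereal ((\<Sum>t\<in>\<phi>. ln (B n t - A n t)) - (\<Sum>t\<in>\<phi>. J t))) + ereal G"
    by (rule ereal_alg)
  also have "\<dots> = (\<Sum>t\<in>\<phi>. nlog (1 - exp (- Iv n (ci n t))) + ereal (ln (B n t - A n t) - J t)) + ereal G"
    by (simp add: sum.distrib sum_subtractf)
  finally show ?thesis by (simp add: J_def G_def)
qed

lemma AB_lim: assumes t: "t \<in> \<phi>"
  shows "(\<lambda>n. A n t) \<longlonglongrightarrow> t" "(\<lambda>n. B n t) \<longlonglongrightarrow> t"
proof -
  have c: "A n t < t" "t \<le> B n t" for n using in_cell[OF t0[OF t]] by auto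
  have L: "(\<lambda>n. B n t - A n t) \<longlonglongrightarrow> 0" by (rule len_tendsto[OF t0[OF t]])
  have "(\<lambda>n. t - A n t) \<longlonglongrightarrow> 0"
    by (rule tendsto_sandwich[OF _ _ tendsto_const L]) (use c in \<open>auto intro!: always_eventually simp: less_imp_le\<close>)
  then have "(\<lambda>n. t - (t - A n t)) \<longlonglongrightarrow> t - 0" by (intro tendsto_intros)
  then show "(\<lambda>n. A n t) \<longlonglongrightarrow> t" by simp
  have "(\<lambda>n. B n t - t) \<longlonglongrightarrow> 0"
    by (rule tendsto_sandwich[OF _ _ tendsto_const L]) (use c in \<open>auto intro!: always_eventually simp: less_imp_le\<close>)
  then have "(\<lambda>n. (B n t - t) + t) \<longlonglongrightarrow> 0 + t" by (intro tendsto_intros)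
  then show "(\<lambda>n. B n t) \<longlonglongrightarrow> t" by simp
qed

lemma J_lim: assumes t: "t \<in> \<phi>"
  shows "(\<lambda>n. \<integral>s\<in>{A n t..B n t}. g s \<partial>lborel) \<longlonglongrightarrow> 0"
proof -
  have ik: "ci n t < k n" for n using ci(1)[OF t0[OF t]] .
  have "(\<lambda>n. \<integral>x. indicator {A n t..B n t} x *\<^sub>R g x \<partial>lborel) \<longlonglongrightarrow> (\<integral>x. 0 \<partial>(lborel::real measure))"
  proof (rule integral_dominated_convergence[where w="\<lambda>x. norm (indicator {0..T} x *\<^sub>R g x)"])
    show "(\<lambda>x. 0::real) \<in> borel_measurable lborel" by simp
    show "(\<lambda>x. indicator {A n t..B n t} x *\<^sub>R g x) \<in> borel_measurable lborel" for n
      using int_sub[OF g_int ik[of n]] unfolding set_integrable_def by (rule borel_measurable_integrable)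
    show "integrable lborel (\<lambda>x. norm (indicator {0..T} x *\<^sub>R g x))"
      using g_int unfolding set_integrable_def by (rule integrable_norm)
    show "AE x in lborel. norm (indicator {A n t..B n t} x *\<^sub>R g x) \<le> norm (indicator {0..T} x *\<^sub>R g x)" for n
    proof (rule AE_I2)
      fix x show "norm (indicator {A n t..B n t} x *\<^sub>R g x) \<le> norm (indicator {0..T} x *\<^sub>R g x)"
        using cells_sub[OF ik[of n]] by (auto split: split_indicator)
    qed
    show "AE x in lborel. (\<lambda>n. indicator {A n t..B n t} x *\<^sub>R g x) \<longlonglongrightarrow> 0"
      using AE_lborel_singleton[of t]
    proof eventually_elim
      case (elim x)
      have "eventually (\<lambda>n. x \<notin> {A n t..B n t}) sequentially"
      proof (cases "x < t")
        case True
        have "eventually (\<lambda>n. x < A n t) sequentially" using AB_lim(1)[OF t] True by (rule order_tendstoD)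
        then show ?thesis by eventually_elim auto
      next
        case False
        then have "t < x" using elim by simp
        have "eventually (\<lambda>n. B n t < x) sequentially" using AB_lim(2)[OF t] \<open>t < x\<close> by (rule order_tendstoD)
        then show ?thesis by eventually_elim auto
      qed
      then have "eventually (\<lambda>n. indicator {A n t..B n t} x *\<^sub>R g x = 0) sequentially"
        by eventually_elim simp
      then show ?case by (rule tendsto_eventually)
    qed
  qed
  then show ?thesis by (simp add: set_lebesgue_integral_def)
qed

lemma point_lim: assumes t: "t \<in> \<phi>"
  shows "(\<lambda>n. nlog (1 - exp (- Iv n (ci n t))) + ereal (ln (B n t - A n t) - (\<integral>s\<in>{A n t..B n t}. g s \<partial>lborel)))
      \<longlonglongrightarrow> nlog (lam t (hist \<phi> t))"
proof -
  define I' where "I' n = (\<integral>s\<in>{A n t..B n t}. lam s (hist \<phi> t) \<partial>lborel)" for n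
  have ik: "ci n t < k n" for n using ci(1)[OF t0[OF t]] .
  have lenpos: "0 < B n t - A n t" for n using ab_less[OF ik[of n]] by simp
  have q: "(\<lambda>n. I' n / (B n t - A n t)) \<longlonglongrightarrow> lam t (hist \<phi> t)"
    using good[OF t] by (simp add: avg_eq[OF t0[OF t]] I'_def)
  have I'nn: "0 \<le> I' n" for n
    unfolding I'_def set_lebesgue_integral_def
    by (intro integral_nonneg_AE AE_I2) (simp add: lam_nonneg)
  have lim: "(\<lambda>n. nlog (1 - exp (- I' n)) + ereal (ln (B n t - A n t) - (\<integral>s\<in>{A n t..B n t}. g s \<partial>lborel)))
      \<longlonglongrightarrow> nlog (lam t (hist \<phi> t))"
    by (rule abstract_lim[OF lenpos len_tendsto[OF t0[OF t]] q I'nn J_lim[OF t] lam_nonneg])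
  have "eventually (\<lambda>n. \<forall>s\<in>\<phi>-{t}. s \<notin> {A n t<..B n t}) sequentially" by (rule sepd[OF t])
  then have ev: "eventually (\<lambda>n. nlog (1 - exp (- I' n)) + ereal (ln (B n t - A n t) - (\<integral>s\<in>{A n t..B n t}. g s \<partial>lborel)) =
      nlog (1 - exp (- Iv n (ci n t))) + ereal (ln (B n t - A n t) - (\<integral>s\<in>{A n t..B n t}. g s \<partial>lborel))) sequentially"
  proof eventually_elim
    case (elim n)
    then have "Iv n (ci n t) = I' n" using hist_cell[OF t elim] by (simp add: Iv_def I'_def)
    then show ?case by simp
  qed
  show ?thesis by (rule Lim_transform_eventually[OF lim ev])
qed

lemma nlog_not_MInf: "nlog x \<noteq> -\<infinity>"
  by (simp add: nlog_def)

lemma sum_not_MInf: "finite S \<Longrightarrow> (\<And>t. t \<in> S \<Longrightarrow> (L t :: ereal) \<noteq> -\<infinity>) \<Longrightarrow> sum L S \<noteq> -\<infinity>"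
proof (induction S rule: finite_induct)
  case (insert x F)
  then show ?case by simp
qed simp

lemma sum_lim_ereal:
  fixes f :: "'b \<Rightarrow> nat \<Rightarrow> ereal"
  assumes "finite S" "\<And>t. t \<in> S \<Longrightarrow> f t \<longlonglongrightarrow> L t" "\<And>t. t \<in> S \<Longrightarrow> L t \<noteq> -\<infinity>"
  shows "(\<lambda>n. \<Sum>t\<in>S. f t n) \<longlonglongrightarrow> (\<Sum>t\<in>S. L t)"
  using assms
proof (induction S rule: finite_induct)
  case (insert x F)
  have "(\<lambda>n. f x n + (\<Sum>t\<in>F. f t n)) \<longlonglongrightarrow> L x + (\<Sum>t\<in>F. L t)"
    by (rule tendsto_add_ereal_nonneg) (use insert sum_not_MInf[of F L] in auto)
  then show ?case using insert by simp
qed simp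

theorem det_main: "LHS \<longlonglongrightarrow> S_ll T lam \<phi>"
proof -
  define G where "G = (\<integral>s\<in>{0..T}. g s \<partial>lborel)"
  have lim: "(\<lambda>n. (\<Sum>t\<in>\<phi>. nlog (1 - exp (- Iv n (ci n t))) + ereal (ln (B n t - A n t) - (\<integral>s\<in>{A n t..B n t}. g s \<partial>lborel)))
                 + ereal G) \<longlonglongrightarrow> (\<Sum>t\<in>\<phi>. nlog (lam t (hist \<phi> t))) + ereal G"
  proof (rule tendsto_add_ereal_nonneg)
    show "(\<Sum>t\<in>\<phi>. nlog (lam t (hist \<phi> t))) \<noteq> -\<infinity>"
      by (rule sum_not_MInf[OF fin]) (simp add: nlog_not_MInf)
    show "(\<lambda>n. \<Sum>t\<in>\<phi>. nlog (1 - exp (- Iv n (ci n t))) + ereal (ln (B n t - A n t) - (\<integral>s\<in>{A n t..B n t}. g s \<partial>lborel)))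
        \<longlonglongrightarrow> (\<Sum>t\<in>\<phi>. nlog (lam t (hist \<phi> t)))"
      by (rule sum_lim_ereal[OF fin point_lim]) (simp_all add: nlog_not_MInf)
  qed auto
  have "eventually (\<lambda>n. \<forall>t\<in>\<phi>. \<forall>s\<in>\<phi>-{t}. s \<notin> {A n t<..B n t}) sequentially"
    using fin sepd by (intro eventually_ball_finite) auto
  then have ev: "eventually (\<lambda>n. (\<Sum>t\<in>\<phi>. nlog (1 - exp (- Iv n (ci n t))) + ereal (ln (B n t - A n t) - (\<integral>s\<in>{A n t..B n t}. g s \<partial>lborel)))
                 + ereal G = LHS n) sequentially"
    by eventually_elim (simp add: decomp G_def)
  have "S_ll T lam \<phi> = (\<Sum>t\<in>\<phi>. nlog (lam t (hist \<phi> t))) + ereal G"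
    by (simp add: S_ll_def G_def g_def)
  then show ?thesis using Lim_transform_eventually[OF lim ev] by simp
qed

end


lemma LIMSEQ_iff_rat:
  fixes X :: "nat \<Rightarrow> real"
  shows "X \<longlonglongrightarrow> L \<longleftrightarrow> (\<forall>m. \<exists>N. \<forall>n\<ge>N. \<bar>X n - L\<bar> < 1 / real (Suc m))"
proof
  assume "X \<longlonglongrightarrow> L"
  then show "\<forall>m. \<exists>N. \<forall>n\<ge>N. \<bar>X n - L\<bar> < 1 / real (Suc m)"
    unfolding LIMSEQ_def dist_real_def by (metis of_nat_0_less_iff zero_less_Suc zero_less_divide_1_iff)
next
  assume *: "\<forall>m. \<exists>N. \<forall>n\<ge>N. \<bar>X n - L\<bar> < 1 / real (Suc m)"
  show "X \<longlonglongrightarrow> L"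
  proof (rule LIMSEQ_I)
    fix r :: real assume "0 < r"
    then obtain m where m: "1 / real (Suc m) < r" using nat_approx_posE by blast
    obtain N where "\<forall>n\<ge>N. \<bar>X n - L\<bar> < 1 / real (Suc m)" using * by blast
    then have "\<forall>n\<ge>N. norm (X n - L) < r" using m by (auto intro: less_trans)
    then show "\<exists>N. \<forall>n\<ge>N. norm (X n - L) < r" by blast
  qed
qed

locale full = dis +
  fixes lam :: "real \<Rightarrow> real list \<Rightarrow> real"
  assumes CI: "conditional_intensity T lam"
begin

definition Gj :: "nat \<Rightarrow> real \<Rightarrow> (nat \<Rightarrow> real) \<Rightarrow> real" where
  "Gj j t z = (if sorted_wrt (<) (map z [0..<j]) then lam t (map z [0..<j]) else 0)"

lemma Gj_meas: "(\<lambda>(t, z). Gj j t z) \<in> borel_measurable (lborel \<Otimes>\<^sub>M (\<Pi>\<^sub>M l\<in>{..<j}. lborel))"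
  using CI unfolding conditional_intensity_def Gj_def by blast

definition goodG :: "nat \<Rightarrow> real \<Rightarrow> (nat \<Rightarrow> real) \<Rightarrow> bool" where
  "goodG j u z \<longleftrightarrow> (\<lambda>n. avg (\<lambda>s. Gj j s z) n u) \<longlonglongrightarrow> Gj j u z"

lemma int_meas: "(\<lambda>z. \<integral>s\<in>{c..d}. Gj j s z \<partial>lborel) \<in> borel_measurable (\<Pi>\<^sub>M l\<in>{..<j}. lborel)"
proof -
  have "(\<lambda>(t, z). Gj j t z) \<in> borel_measurable (lborel \<Otimes>\<^sub>M (\<Pi>\<^sub>M l\<in>{..<j}. lborel))" by (rule Gj_meas)
  then have "(\<lambda>(z, t). Gj j t z) \<in> borel_measurable ((\<Pi>\<^sub>M l\<in>{..<j}. lborel) \<Otimes>\<^sub>M lborel)"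
    by (subst measurable_pair_swap_iff) simp
  then have g: "(\<lambda>p. Gj j (snd p) (fst p)) \<in> borel_measurable ((\<Pi>\<^sub>M l\<in>{..<j}. lborel) \<Otimes>\<^sub>M lborel)"
    by (simp add: split_beta')
  have m1: "(\<lambda>p. indicator {c..d} (snd p) :: real) \<in> borel_measurable ((\<Pi>\<^sub>M l\<in>{..<j}. lborel) \<Otimes>\<^sub>M lborel)"
    by (rule measurable_compose[OF measurable_snd borel_measurable_indicator]) simp
  have "(\<lambda>p. indicator {c..d} (snd p) *\<^sub>R Gj j (snd p) (fst p)) \<in> borel_measurable ((\<Pi>\<^sub>M l\<in>{..<j}. lborel) \<Otimes>\<^sub>M lborel)"
    by (rule borel_measurable_scaleR[OF m1 g])
  then have "(\<lambda>(z, t). indicator {c..d} t *\<^sub>R Gj j t z) \<in> borel_measurable ((\<Pi>\<^sub>M l\<in>{..<j}. lborel) \<Otimes>\<^sub>M lborel)"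
    by (simp add: split_beta')
  then show ?thesis unfolding set_lebesgue_integral_def
    by (rule lborel.borel_measurable_lebesgue_integral)
qed

abbreviation "PJ j \<equiv> lborel \<Otimes>\<^sub>M (\<Pi>\<^sub>M l\<in>{..<j}. (lborel::real measure))"

lemma avgG_meas: "(\<lambda>p. avg (\<lambda>s. Gj j s (snd p)) n (fst p)) \<in> borel_measurable (PJ j)"
  unfolding avg_def
proof (intro borel_measurable_sum borel_measurable_times borel_measurable_divide)
  fix i
  show "(\<lambda>p. indicator {a n i<..b n i} (fst p) :: real) \<in> borel_measurable (PJ j)"
    by (rule measurable_compose[OF measurable_fst borel_measurable_indicator]) simp
  show "(\<lambda>p. \<integral>s\<in>{a n i..b n i}. Gj j s (snd p) \<partial>lborel) \<in> borel_measurable (PJ j)"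
    by (rule measurable_compose[OF measurable_snd int_meas])
qed simp

lemma Gj_meas': "(\<lambda>p. Gj j (fst p) (snd p)) \<in> borel_measurable (PJ j)"
  using Gj_meas by (simp add: split_beta')

lemma goodG_pred: "{p \<in> space (PJ j). goodG j (fst p) (snd p)} \<in> sets (PJ j)"
proof -
  have [measurable]: "(\<lambda>p. avg (\<lambda>s. Gj j s (snd p)) n (fst p)) \<in> borel_measurable (PJ j)" for n
    by (rule avgG_meas)
  have [measurable]: "(\<lambda>p. Gj j (fst p) (snd p)) \<in> borel_measurable (PJ j)" by (rule Gj_meas')
  have "{p \<in> space (PJ j). goodG j (fst p) (snd p)} =
    {p \<in> space (PJ j). \<forall>m. \<exists>N. \<forall>n. N \<le> n \<longrightarrow> \<bar>avg (\<lambda>s. Gj j s (snd p)) n (fst p) - Gj j (fst p) (snd p)\<bar> < 1 / real (Suc m)}"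
    unfolding goodG_def LIMSEQ_iff_rat by simp
  also have "\<dots> \<in> sets (PJ j)" by measurable
  finally show ?thesis .
qed

end


lemma nth_le_iff_card:
  fixes \<phi> :: "real set"
  assumes fin: "finite \<phi>" and j: "j < card \<phi>"
  shows "sorted_list_of_set \<phi> ! j \<le> c \<longleftrightarrow> j < card (\<phi> \<inter> {..c})"
proof -
  define xs where "xs = sorted_list_of_set \<phi>"
  have st: "sorted_wrt (<) xs" unfolding xs_def by simp
  have sx: "set xs = \<phi>" unfolding xs_def using fin by simp
  have lx: "length xs = card \<phi>" unfolding xs_def by simp
  have dx: "distinct xs" unfolding xs_def by simp
  have mono: "xs ! l \<le> xs ! l'" if "l \<le> l'" "l' < length xs" for l l'
    using st that by (cases "l = l'") (auto simp: sorted_wrt_iff_nth_less less_imp_le)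
  have fin2: "finite (\<phi> \<inter> {..c})" using fin by simp
  have main: "xs ! j \<le> c \<longleftrightarrow> j < card (\<phi> \<inter> {..c})"
  proof
    assume le: "xs ! j \<le> c"
    have sub: "(\<lambda>l. xs ! l) ` {..j} \<subseteq> \<phi> \<inter> {..c}"
    proof
      fix s assume "s \<in> (\<lambda>l. xs ! l) ` {..j}"
      then obtain l where l: "l \<le> j" "s = xs ! l" by auto
      then have "s \<in> set xs" using j lx by auto
      moreover have "s \<le> c" using mono[of l j] l j lx le by auto
      ultimately show "s \<in> \<phi> \<inter> {..c}" using sx by auto
    qed
    have "inj_on (\<lambda>l. xs ! l) {..j}"
      using dx j lx by (auto simp: inj_on_def nth_eq_iff_index_eq)
    then have "card ((\<lambda>l. xs ! l) ` {..j}) = Suc j" by (simp add: card_image)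
    then show "j < card (\<phi> \<inter> {..c})" using card_mono[OF fin2 sub] by simp
  next
    assume lt: "j < card (\<phi> \<inter> {..c})"
    show "xs ! j \<le> c"
    proof (rule ccontr)
      assume "\<not> xs ! j \<le> c"
      then have gt: "c < xs ! j" by simp
      have sub: "\<phi> \<inter> {..c} \<subseteq> (\<lambda>l. xs ! l) ` {..<j}"
      proof
        fix s assume s: "s \<in> \<phi> \<inter> {..c}"
        then obtain l where l: "l < length xs" "s = xs ! l" using sx by (auto simp: in_set_conv_nth)
        have "l < j"
        proof (rule ccontr)
          assume "\<not> l < j"
          then have "xs ! j \<le> xs ! l" using mono l(1) by simp
          then show False using gt s l by auto
        qed
        then show "s \<in> (\<lambda>l. xs ! l) ` {..<j}" using l by auto
      qed
      have "card (\<phi> \<inter> {..c}) \<le> card ((\<lambda>l. xs ! l) ` {..<j})" by (rule card_mono) (auto simp: sub)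
      also have "\<dots> \<le> j" using card_image_le[of "{..<j}" "\<lambda>l. xs ! l"] by simp
      finally show False using lt by simp
    qed
  qed
  then show ?thesis by (simp add: xs_def)
qed

context full
begin

abbreviation "CS \<equiv> config_space T"

definition Om :: "real set set" where "Om = {\<phi>. finite \<phi> \<and> \<phi> \<subseteq> {0..T}}"

definition Gen :: "real set set set" where
  "Gen = {{\<phi>. finite \<phi> \<and> \<phi> \<subseteq> {0..T} \<and> card (\<phi> \<inter> Y) = j} | Y j. Y \<in> sets borel}"

lemma Gen_sub: "Gen \<subseteq> Pow Om" by (auto simp: Gen_def Om_def)

lemma space_CS: "space CS = Om"
  unfolding config_space_def Om_def Gen_def[symmetric] by (rule space_measure_of[OF Gen_sub[unfolded Om_def]])

lemma sets_CS: "sets CS = sigma_sets Om Gen"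
  unfolding config_space_def Om_def Gen_def[symmetric] by (rule sets_measure_of[OF Gen_sub[unfolded Om_def]])

lemma gen_sets: "S0 \<in> sets borel \<Longrightarrow> {\<phi>\<in>space CS. card (\<phi> \<inter> S0) = j} \<in> sets CS"
proof -
  assume B: "S0 \<in> sets borel"
  have "{\<phi>\<in>space CS. card (\<phi> \<inter> S0) = j} = {\<phi>. finite \<phi> \<and> \<phi> \<subseteq> {0..T} \<and> card (\<phi> \<inter> S0) = j}"
    by (auto simp: space_CS Om_def)
  also have "\<dots> \<in> Gen" unfolding Gen_def using B by blast
  finally show ?thesis unfolding sets_CS by (rule sigma_sets.Basic)
qed

lemma cnt_gt_sets: "S0 \<in> sets borel \<Longrightarrow> {\<phi>\<in>space CS. j < card (\<phi> \<inter> S0)} \<in> sets CS"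
proof -
  assume B: "S0 \<in> sets borel"
  have "{\<phi>\<in>space CS. j < card (\<phi> \<inter> S0)} = (\<Union>l\<in>{j<..}. {\<phi>\<in>space CS. card (\<phi> \<inter> S0) = l})" by auto
  also have "\<dots> \<in> sets CS" using gen_sets[OF B] by (intro sets.countable_UN) auto
  finally show ?thesis .
qed

lemma card_gt_sets: "{\<phi>\<in>space CS. j < card \<phi>} \<in> sets CS"
  using cnt_gt_sets[of UNIV j] by simp

definition tj :: "nat \<Rightarrow> real set \<Rightarrow> real" where
  "tj j \<phi> = (if j < card \<phi> then sorted_list_of_set \<phi> ! j else 0)"

lemma tj_meas: "tj j \<in> borel_measurable CS"
proof (subst borel_measurable_iff_le, intro allI)
  fix c :: real
  have fin: "finite \<phi>" if "\<phi> \<in> space CS" for \<phi> using that by (simp add: space_CS Om_def)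
  have "{\<phi> \<in> space CS. tj j \<phi> \<le> c} =
      ({\<phi>\<in>space CS. j < card \<phi>} \<inter> {\<phi>\<in>space CS. j < card (\<phi> \<inter> {..c})}) \<union>
      ((space CS - {\<phi>\<in>space CS. j < card \<phi>}) \<inter> (if 0 \<le> c then space CS else {}))"
    using nth_le_iff_card fin by (auto simp: tj_def)
  also have "\<dots> \<in> sets CS"
    using card_gt_sets[of j] cnt_gt_sets[of "{..c}" j] by auto
  finally show "{\<phi> \<in> space CS. tj j \<phi> \<le> c} \<in> sets CS" .
qed

lemma zj_meas: "(\<lambda>\<phi>. (tj j \<phi>, \<lambda>l\<in>{..<j}. tj l \<phi>)) \<in> measurable CS (PJ j)"
proof (rule measurable_Pair)
  show "tj j \<in> measurable CS lborel" using tj_meas by simp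
  show "(\<lambda>\<phi>. \<lambda>l\<in>{..<j}. tj l \<phi>) \<in> measurable CS (\<Pi>\<^sub>M l\<in>{..<j}. lborel)"
    by (rule measurable_restrict) (use tj_meas in simp)
qed

definition Zbad :: "real set" where
  "Zbad = - {0<..<T} \<union> (\<Union>n. \<Union>i. {a n i})"

lemma Zbad_sets: "Zbad \<in> sets borel"
  unfolding Zbad_def by (intro sets.Un sets.countable_UN' sets.compl_sets) auto

definition Abad :: "real set set" where
  "Abad = {\<phi>\<in>space CS. \<exists>j. j < card \<phi> \<and> (tj j \<phi> \<in> Zbad \<or> \<not> goodG j (tj j \<phi>) (\<lambda>l\<in>{..<j}. tj l \<phi>))}"

lemma Abad_sets: "Abad \<in> sets CS"
proof -
  define W where "W j = {p\<in>space (PJ j). fst p \<in> Zbad \<or> \<not> goodG j (fst p) (snd p)}" for j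
  have W: "W j \<in> sets (PJ j)" for j
  proof -
    have "W j = ((\<lambda>p. fst p) -` Zbad \<inter> space (PJ j)) \<union> (space (PJ j) - {p \<in> space (PJ j). goodG j (fst p) (snd p)})"
      by (auto simp: W_def)
    also have "\<dots> \<in> sets (PJ j)"
      using measurable_sets[OF measurable_fst, of Zbad lborel] Zbad_sets goodG_pred[of j]
      by (intro sets.Un sets.Diff sets.top) auto
    finally show ?thesis .
  qed
  have "Abad = (\<Union>j. {\<phi>\<in>space CS. j < card \<phi>} \<inter> ((\<lambda>\<phi>. (tj j \<phi>, \<lambda>l\<in>{..<j}. tj l \<phi>)) -` W j \<inter> space CS))"
    using measurable_space[OF zj_meas] by (auto simp: Abad_def W_def)
  also have "\<dots> \<in> sets CS"
    using card_gt_sets measurable_sets[OF zj_meas W] by (intro sets.countable_UN) auto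
  finally show ?thesis .
qed

end


context full
begin

lemma good_AE:
  assumes H: "sorted_wrt (<) H" "set H \<subseteq> {0..T}"
  shows "AE u in lborel. u \<in> {0<..T} \<longrightarrow> (\<lambda>n. avg (\<lambda>s. lam s H) n u) \<longlonglongrightarrow> lam u H"
proof -
  define F where "F s = indicator {0..T} s * lam s H" for s
  have nn: "0 \<le> lam s H" for s using CI H(1) unfolding conditional_intensity_def by blast
  have si: "set_integrable lborel {0..T} (\<lambda>s. lam s H)" using CI H unfolding conditional_intensity_def by blast
  have Fi: "integrable lborel F" using si unfolding set_integrable_def F_def by simp
  have Fn: "0 \<le> F s" for s using nn by (simp add: F_def)
  have avgeq: "avg F n u = avg (\<lambda>s. lam s H) n u" for n u
    unfolding avg_def
  proof (intro sum.cong refl arg_cong2[where f="(*)"] arg_cong2[where f="(/)"])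
    fix i assume "i \<in> {..<k n}"
    then have "{a n i..b n i} \<subseteq> {0..T}" using a_ge b_le by force
    then show "(\<integral>t\<in>{a n i..b n i}. F t \<partial>lborel) = (\<integral>t\<in>{a n i..b n i}. lam t H \<partial>lborel)"
      by (intro set_lebesgue_integral_cong) (auto simp: F_def)
  qed
  show ?thesis
    using diff[OF Fi Fn]
  proof eventually_elim
    case (elim u)
    show ?case
    proof
      assume u: "u \<in> {0<..T}"
      have "(\<lambda>n. avg F n u) \<longlonglongrightarrow> F u" using elim u by blast
      moreover have "F u = lam u H" using u by (simp add: F_def)
      ultimately show "(\<lambda>n. avg (\<lambda>s. lam s H) n u) \<longlonglongrightarrow> lam u H" using avgeq by simp
    qed
  qed
qed

lemma goodG_AE:
  assumes "sorted_wrt (<) (map z [0..<m])" "set (map z [0..<m]) \<subseteq> {0..T}"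
  shows "AE u in lborel. u \<in> {0<..T} \<longrightarrow> goodG m u z"
proof -
  have "Gj m s z = lam s (map z [0..<m])" for s using assms(1) by (simp add: Gj_def)
  then show ?thesis using good_AE[OF assms] by (simp add: goodG_def)
qed

abbreviation "UM \<equiv> uniform_measure lborel {0..T}"

lemma UM_prob: "prob_space UM"
  using Tpos by (intro prob_space_uniform_measure) auto

lemma Zbad_AE: "AE u in UM. u \<notin> Zbad"
proof (rule AE_uniform_measureI)
  define C where "C = {0, T} \<union> (\<Union>n. \<Union>i. {a n i})"
  have "countable C" unfolding C_def by auto
  then have "AE u in lborel. u \<notin> C" by (intro AE_not_in countable_imp_null_set_lborel)
  then show "AE u in lborel. u \<in> {0..T} \<longrightarrow> u \<notin> Zbad"
    by eventually_elim (auto simp: C_def Zbad_def)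
qed simp

lemma AE_pt:
  assumes "sorted_wrt (<) (map z [0..<m])" "set (map z [0..<m]) \<subseteq> {0..T}"
  shows "AE u in UM. u \<notin> Zbad \<longrightarrow> goodG m u z"
proof (rule AE_uniform_measureI)
  show "AE u in lborel. u \<in> {0..T} \<longrightarrow> u \<notin> Zbad \<longrightarrow> goodG m u z"
    using goodG_AE[OF assms] by eventually_elim (auto simp: Zbad_def)
qed simp

abbreviation "PI \<equiv> (\<Pi>\<^sub>M i\<in>(UNIV::nat set). UM)"

definition Bi :: "nat \<Rightarrow> (nat \<Rightarrow> real) set" where
  "Bi i = {x \<in> space PI. x i \<in> Zbad \<or> (\<exists>\<sigma>. i \<notin> set \<sigma> \<and> sorted_wrt (<) (map x \<sigma>) \<and> set (map x \<sigma>) \<subseteq> {0..T} \<and>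
      \<not> goodG (length \<sigma>) (x i) (\<lambda>l\<in>{..<length \<sigma>}. x (\<sigma> ! l)))}"

lemma meas_UM: "measurable M UM = measurable M lborel"
  by (rule measurable_cong_sets) auto

lemma comp_meas: "(\<lambda>x. x l) \<in> measurable PI lborel"
  using measurable_component_singleton[of l UNIV "\<lambda>_. UM"] by (simp add: meas_UM)

lemma Bi_sets: "Bi i \<in> sets PI"
proof -
  have [measurable]: "(\<lambda>x. x l) \<in> measurable PI borel" for l using comp_meas[of l] by simp
  have S: "{x\<in>space PI. sorted_wrt (<) (map x \<sigma>) \<and> set (map x \<sigma>) \<subseteq> {0..T}} \<in> sets PI" for \<sigma> :: "nat list"
  proof -
    have "{x\<in>space PI. sorted_wrt (<) (map x \<sigma>) \<and> set (map x \<sigma>) \<subseteq> {0..T}} =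
        {x\<in>space PI. (\<forall>p<length \<sigma>. \<forall>q<length \<sigma>. p < q \<longrightarrow> x (\<sigma> ! p) < x (\<sigma> ! q)) \<and> (\<forall>p<length \<sigma>. x (\<sigma> ! p) \<in> {0..T})}"
      by (auto simp: sorted_wrt_iff_nth_less image_subset_iff set_conv_nth)
    also have "\<dots> \<in> sets PI" by measurable
    finally show ?thesis .
  qed
  have G: "{x\<in>space PI. goodG (length \<sigma>) (x i) (\<lambda>l\<in>{..<length \<sigma>}. x (\<sigma> ! l))} \<in> sets PI" for \<sigma> :: "nat list"
  proof -
    have m: "(\<lambda>x. (x i, \<lambda>l\<in>{..<length \<sigma>}. x (\<sigma> ! l))) \<in> measurable PI (PJ (length \<sigma>))"
      by (intro measurable_Pair measurable_restrict comp_meas)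
    have "{x\<in>space PI. goodG (length \<sigma>) (x i) (\<lambda>l\<in>{..<length \<sigma>}. x (\<sigma> ! l))} =
        (\<lambda>x. (x i, \<lambda>l\<in>{..<length \<sigma>}. x (\<sigma> ! l))) -` {p \<in> space (PJ (length \<sigma>)). goodG (length \<sigma>) (fst p) (snd p)} \<inter> space PI"
      using measurable_space[OF m] by auto
    also have "\<dots> \<in> sets PI" by (rule measurable_sets[OF m goodG_pred])
    finally show ?thesis .
  qed
  have Z: "{x\<in>space PI. x i \<in> Zbad} \<in> sets PI"
    using measurable_sets[OF comp_meas[of i] Zbad_sets[folded sets_lborel]] by (simp add: Int_def conj_commute vimage_def)
  have "Bi i = {x\<in>space PI. x i \<in> Zbad} \<union> (\<Union>\<sigma>\<in>{\<sigma>. i \<notin> set \<sigma>}.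
      {x\<in>space PI. sorted_wrt (<) (map x \<sigma>) \<and> set (map x \<sigma>) \<subseteq> {0..T}} - {x\<in>space PI. goodG (length \<sigma>) (x i) (\<lambda>l\<in>{..<length \<sigma>}. x (\<sigma> ! l))})"
    unfolding Bi_def by blast
  also have "\<dots> \<in> sets PI"
    using S G Z by (intro sets.Un sets.countable_UN' sets.Diff) auto
  finally show ?thesis .
qed

lemma map_restrict: "map (\<lambda>l\<in>{..<length \<sigma>}. X (\<sigma> ! l)) [0..<length \<sigma>] = map X \<sigma>"
  by (rule nth_equalityI) auto

lemma Bi_null: "emeasure PI (Bi i) = 0"
proof -
  define PX where "PX = (\<Pi>\<^sub>M j\<in>(UNIV - {i}). UM)"
  interpret UMp: prob_space UM by (rule UM_prob)
  interpret PX: prob_space PX unfolding PX_def by (intro prob_space_PiM UM_prob)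
  interpret P2: pair_sigma_finite UM PX by unfold_locales
  define h where "h = (\<lambda>(x::real, X::nat \<Rightarrow> real). X(i := x))"
  have eqU: "insert i (UNIV - {i}) = UNIV" by auto
  have D: "distr (UM \<Otimes>\<^sub>M PX) PI h = PI"
    using distr_pair_PiM_eq_PiM[of "UNIV - {i}" "\<lambda>_. UM" i] UM_prob unfolding eqU PX_def h_def by simp
  have hm: "h \<in> measurable (UM \<Otimes>\<^sub>M PX) PI"
  proof -
    have "(\<lambda>p. (snd p)(i := fst p)) \<in> measurable (UM \<Otimes>\<^sub>M PX) PI"
      by (rule measurable_fun_upd[where J="UNIV - {i}"]) (auto simp: PX_def)
    then show ?thesis by (simp add: h_def split_beta')
  qed
  have N: "h -` Bi i \<inter> space (UM \<Otimes>\<^sub>M PX) \<in> sets (UM \<Otimes>\<^sub>M PX)"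
    by (rule measurable_sets[OF hm Bi_sets])
  have inner: "AE u in UM. (X(i := u)) \<notin> Bi i" for X
  proof -
    have "AE u in UM. \<forall>\<sigma>. (i \<notin> set \<sigma> \<and> sorted_wrt (<) (map X \<sigma>) \<and> set (map X \<sigma>) \<subseteq> {0..T}) \<longrightarrow>
        (u \<notin> Zbad \<longrightarrow> goodG (length \<sigma>) u (\<lambda>l\<in>{..<length \<sigma>}. X (\<sigma> ! l)))"
      unfolding AE_all_countable
    proof
      fix \<sigma> :: "nat list"
      show "AE u in UM. (i \<notin> set \<sigma> \<and> sorted_wrt (<) (map X \<sigma>) \<and> set (map X \<sigma>) \<subseteq> {0..T}) \<longrightarrow>
        (u \<notin> Zbad \<longrightarrow> goodG (length \<sigma>) u (\<lambda>l\<in>{..<length \<sigma>}. X (\<sigma> ! l)))"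
      proof (cases "i \<notin> set \<sigma> \<and> sorted_wrt (<) (map X \<sigma>) \<and> set (map X \<sigma>) \<subseteq> {0..T}")
        case True
        then have "AE u in UM. u \<notin> Zbad \<longrightarrow> goodG (length \<sigma>) u (\<lambda>l\<in>{..<length \<sigma>}. X (\<sigma> ! l))"
          by (intro AE_pt) (simp_all add: map_restrict)
        then show ?thesis by eventually_elim simp
      next
        case False
        show ?thesis by (rule AE_I2) (use False in blast)
      qed
    qed
    then show ?thesis using Zbad_AE
    proof eventually_elim
      case (elim u)
      show ?case
      proof
        assume "X(i := u) \<in> Bi i"
        then have "u \<in> Zbad \<or> (\<exists>\<sigma>. i \<notin> set \<sigma> \<and> sorted_wrt (<) (map (X(i := u)) \<sigma>) \<and> set (map (X(i := u)) \<sigma>) \<subseteq> {0..T} \<and>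
            \<not> goodG (length \<sigma>) u (\<lambda>l\<in>{..<length \<sigma>}. (X(i := u)) (\<sigma> ! l)))"
          unfolding Bi_def by simp
        then obtain \<sigma> where \<sigma>: "i \<notin> set \<sigma>" "sorted_wrt (<) (map (X(i := u)) \<sigma>)" "set (map (X(i := u)) \<sigma>) \<subseteq> {0..T}"
            "\<not> goodG (length \<sigma>) u (\<lambda>l\<in>{..<length \<sigma>}. (X(i := u)) (\<sigma> ! l))"
          using elim(2) by blast
        have e1: "map (X(i := u)) \<sigma> = map X \<sigma>" using \<sigma>(1) by (intro map_cong) auto
        have e2: "(\<lambda>l\<in>{..<length \<sigma>}. (X(i := u)) (\<sigma> ! l)) = (\<lambda>l\<in>{..<length \<sigma>}. X (\<sigma> ! l))"
          using \<sigma>(1) by (intro restrict_ext) (auto dest: nth_mem)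
        show False using elim(1) \<sigma> elim(2) unfolding e1 e2 by blast
      qed
    qed
  qed
  have meas: "{p \<in> space (UM \<Otimes>\<^sub>M PX). (snd p)(i := fst p) \<notin> Bi i} \<in> sets (UM \<Otimes>\<^sub>M PX)"
  proof -
    have "{p \<in> space (UM \<Otimes>\<^sub>M PX). (snd p)(i := fst p) \<notin> Bi i} = space (UM \<Otimes>\<^sub>M PX) - (h -` Bi i \<inter> space (UM \<Otimes>\<^sub>M PX))"
      by (auto simp: h_def)
    also have "\<dots> \<in> sets (UM \<Otimes>\<^sub>M PX)" by (rule sets.compl_sets[OF N])
    finally show ?thesis .
  qed
  have "AE X in PX. AE u in UM. X(i := u) \<notin> Bi i" using inner by simp
  then have "AE u in UM. AE X in PX. X(i := u) \<notin> Bi i"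
    using P2.AE_commute[of "\<lambda>u X. X(i := u) \<notin> Bi i"] meas by simp
  then have ae: "AE p in UM \<Otimes>\<^sub>M PX. (snd p)(i := fst p) \<notin> Bi i"
    by (intro P2.AE_pair_measure[OF meas]) simp
  have "emeasure (UM \<Otimes>\<^sub>M PX) (h -` Bi i \<inter> space (UM \<Otimes>\<^sub>M PX)) = 0"
    using ae N by (subst (asm) AE_iff_measurable[OF N]) (auto simp: h_def)
  then have "emeasure (distr (UM \<Otimes>\<^sub>M PX) PI h) (Bi i) = 0"
    by (simp add: emeasure_distr[OF hm Bi_sets])
  then show ?thesis using D by simp
qed

end


lemma strict_nth_less:
  fixes xs :: "real list"
  assumes "sorted_wrt (<) xs" "l < length xs" "p < length xs"
  shows "xs ! l < xs ! p \<longleftrightarrow> l < p"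
proof
  assume "xs ! l < xs ! p"
  show "l < p"
  proof (rule ccontr)
    assume "\<not> l < p"
    then have "p \<le> l" by simp
    then have "xs ! p \<le> xs ! l" using assms
      by (cases "p = l") (auto simp: sorted_wrt_iff_nth_less less_imp_le)
    then show False using \<open>xs ! l < xs ! p\<close> by simp
  qed
next
  assume "l < p" then show "xs ! l < xs ! p" using assms by (auto simp: sorted_wrt_iff_nth_less)
qed

lemma hist_nth:
  fixes \<phi> :: "real set"
  assumes fin: "finite \<phi>" and j: "j < card \<phi>"
  shows "hist \<phi> (sorted_list_of_set \<phi> ! j) = take j (sorted_list_of_set \<phi>)"
proof -
  define xs where "xs = sorted_list_of_set \<phi>"
  have st: "sorted_wrt (<) xs" unfolding xs_def by simp
  have sx: "set xs = \<phi>" unfolding xs_def using fin by simp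
  have lx: "length xs = card \<phi>" unfolding xs_def by simp
  have "{s\<in>\<phi>. s < xs ! j} = set (take j xs)"
  proof (intro set_eqI iffI)
    fix s assume s: "s \<in> {s\<in>\<phi>. s < xs ! j}"
    then obtain l where l: "l < length xs" "s = xs ! l" using sx by (auto simp: in_set_conv_nth)
    then have "l < j" using strict_nth_less[OF st l(1), of j] s j lx by auto
    then show "s \<in> set (take j xs)" using l by (auto simp: in_set_conv_nth)
  next
    fix s assume "s \<in> set (take j xs)"
    then obtain l where l: "l < j" "s = xs ! l" using j lx by (auto simp: in_set_conv_nth)
    then have "s < xs ! j" using strict_nth_less[OF st, of l j] j lx by auto
    moreover have "s \<in> \<phi>" using l j lx sx by auto
    ultimately show "s \<in> {s\<in>\<phi>. s < xs ! j}" by simp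
  qed
  then have "hist \<phi> (xs ! j) = sorted_list_of_set (set (take j xs))" by (simp add: hist_def)
  also have "\<dots> = take j xs"
    by (rule strict_sorted_equal) (use st in \<open>auto intro: sorted_wrt_take\<close>)
  finally show ?thesis by (simp add: xs_def)
qed

context full
begin

lemma ok_det:
  assumes \<phi>: "\<phi> \<in> space CS" "\<phi> \<notin> Abad"
  shows "det T k a b lam \<phi>"
proof -
  have fin: "finite \<phi>" and sub0: "\<phi> \<subseteq> {0..T}" using \<phi>(1) by (auto simp: space_CS Om_def)
  define xs where "xs = sorted_list_of_set \<phi>"
  have st: "sorted_wrt (<) xs" unfolding xs_def by simp
  have sx: "set xs = \<phi>" unfolding xs_def using fin by simp
  have lx: "length xs = card \<phi>" unfolding xs_def by simp
  have pt: "t \<notin> Zbad \<and> good_hist" if t: "t \<in> \<phi>" and good_hist_def: "good_hist \<longleftrightarrow> (\<lambda>n. avg (\<lambda>s. lam s (hist \<phi> t)) n t) \<longlonglongrightarrow> lam t (hist \<phi> t)" for t good_hist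
  proof -
    obtain j where j: "j < length xs" "t = xs ! j" using t sx by (auto simp: in_set_conv_nth)
    have tj: "tj j \<phi> = t" using j lx by (simp add: tj_def xs_def)
    from \<phi>(2) \<phi>(1) j lx have nb: "\<not> (tj j \<phi> \<in> Zbad \<or> \<not> goodG j (tj j \<phi>) (\<lambda>l\<in>{..<j}. tj l \<phi>))"
      unfolding Abad_def by auto
    define z where "z = (\<lambda>l\<in>{..<j}. tj l \<phi>)"
    have mz: "map z [0..<j] = take j xs"
      by (rule nth_equalityI) (use j lx in \<open>auto simp: z_def tj_def xs_def\<close>)
    have hh: "hist \<phi> t = take j xs" using hist_nth[OF fin, of j] j lx by (simp add: xs_def)
    have sortd: "sorted_wrt (<) (map z [0..<j])" unfolding mz using st by (rule sorted_wrt_take)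
    have G: "Gj j s z = lam s (hist \<phi> t)" for s using sortd by (simp add: Gj_def mz hh)
    show ?thesis using nb unfolding tj z_def[symmetric] goodG_def G good_hist_def by simp
  qed
  show ?thesis
  proof (intro det.intro det_axioms.intro)
    show "dis T k a b" by (rule dis_axioms)
    show "conditional_intensity T lam" by (rule CI)
    show "finite \<phi>" by (rule fin)
    show "\<phi> \<subseteq> {0<..<T}" using pt by (auto simp: Zbad_def)
    show "t \<noteq> a n i" if "t \<in> \<phi>" for n i t using pt[OF that] by (auto simp: Zbad_def)
    show "(\<lambda>n. avg (\<lambda>s. lam s (hist \<phi> t)) n t) \<longlonglongrightarrow> lam t (hist \<phi> t)" if "t \<in> \<phi>" for t
      using pt[OF that] by blast
  qed
qed

abbreviation "Mp \<equiv> measure_pmf (poisson_pmf T) \<Otimes>\<^sub>M PI"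

lemma cover_pre:
  assumes x: "x \<in> space PI" and A: "x ` {..<N} \<in> Abad"
  shows "\<exists>i<N. x \<in> Bi i"
proof -
  define \<phi> where "\<phi> = x ` {..<N}"
  have fin: "finite \<phi>" and sub0: "\<phi> \<subseteq> {0..T}" using A by (auto simp: Abad_def space_CS Om_def \<phi>_def)
  obtain j where j: "j < card \<phi>" and bad: "tj j \<phi> \<in> Zbad \<or> \<not> goodG j (tj j \<phi>) (\<lambda>l\<in>{..<j}. tj l \<phi>)"
    using A unfolding Abad_def \<phi>_def by blast
  define xs where "xs = sorted_list_of_set \<phi>"
  have st: "sorted_wrt (<) xs" unfolding xs_def by simp
  have sx: "set xs = \<phi>" unfolding xs_def using fin by simp
  have lx: "length xs = card \<phi>" unfolding xs_def by simp
  have tj: "tj l \<phi> = xs ! l" if "l < card \<phi>" for l using that by (simp add: tj_def xs_def)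
  have "xs ! j \<in> \<phi>" using j lx sx by auto
  then obtain i where i: "i < N" "x i = xs ! j" unfolding \<phi>_def by auto
  show ?thesis
  proof (cases "x i \<in> Zbad")
    case True
    then show ?thesis using i x by (auto simp: Bi_def)
  next
    case False
    then have ng: "\<not> goodG j (x i) (\<lambda>l\<in>{..<j}. tj l \<phi>)" using bad tj[OF j] i by simp
    define \<sigma> where "\<sigma> = map (\<lambda>v. SOME l. l < N \<and> x l = v) (take j xs)"
    have ex: "(SOME l. l < N \<and> x l = v) < N \<and> x (SOME l. l < N \<and> x l = v) = v" if "v \<in> set (take j xs)" for v
    proof (rule someI_ex)
      have "v \<in> \<phi>" using that sx by (auto dest: in_set_takeD)
      then show "\<exists>l. l < N \<and> x l = v" unfolding \<phi>_def by auto
    qed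
    have mx: "map x \<sigma> = take j xs" unfolding \<sigma>_def by (simp add: map_idI ex)
    have ls: "length \<sigma> = j" unfolding \<sigma>_def using j lx by simp
    have nis: "i \<notin> set \<sigma>"
    proof
      assume "i \<in> set \<sigma>"
      then obtain p where p: "p < length \<sigma>" "\<sigma> ! p = i" by (auto simp: in_set_conv_nth)
      have "x i = (map x \<sigma>) ! p" using p by simp
      also have "\<dots> = xs ! p" using p ls j lx by (simp add: mx)
      finally have "xs ! p = xs ! j" using i by simp
      moreover have "xs ! p < xs ! j" using strict_nth_less[OF st, of p j] p ls j lx by simp
      ultimately show False by simp
    qed
    have so: "sorted_wrt (<) (map x \<sigma>)" unfolding mx using st by (rule sorted_wrt_take)
    have ss: "set (map x \<sigma>) \<subseteq> {0..T}" unfolding mx using sub0 sx by (auto dest: in_set_takeD)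
    have re: "(\<lambda>l\<in>{..<length \<sigma>}. x (\<sigma> ! l)) = (\<lambda>l\<in>{..<j}. tj l \<phi>)"
      unfolding ls
    proof (rule restrict_ext)
      fix l assume l: "l \<in> {..<j}"
      have "x (\<sigma> ! l) = (map x \<sigma>) ! l" using l ls by simp
      also have "\<dots> = xs ! l" using l ls j lx by (simp add: mx)
      also have "\<dots> = tj l \<phi>" using l ls j by (simp add: tj)
      finally show "x (\<sigma> ! l) = tj l \<phi>" .
    qed
    have "x \<in> Bi i" unfolding Bi_def using x nis so ss ng re ls by auto
    then show ?thesis using i by blast
  qed
qed

lemma P0_null: "emeasure (poisson_P0 T) Abad = 0"
proof -
  interpret PIp: prob_space PI by (intro prob_space_PiM UM_prob)
  define f where "f = (\<lambda>(N::nat, x::nat \<Rightarrow> real). x ` {..<N})"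
  define Q where "Q = (\<Union>N. {N} \<times> (\<Union>i\<in>{..<N}. Bi i))"
  have BN: "(\<Union>i\<in>{..<N}. Bi i) \<in> null_sets PI" for N
    by (intro null_sets_UN') (auto simp: null_sets_def Bi_sets Bi_null)
  have QN: "Q \<in> null_sets Mp"
    unfolding Q_def by (intro null_sets_UN PIp.times_in_null_sets2 BN) simp
  have sub: "f -` Abad \<inter> space Mp \<subseteq> Q"
  proof
    fix p assume p: "p \<in> f -` Abad \<inter> space Mp"
    obtain N x where px: "p = (N, x)" by (cases p)
    have x: "x \<in> space PI" using p px by (simp add: space_pair_measure)
    have "x ` {..<N} \<in> Abad" using p px by (simp add: f_def)
    then obtain i where "i < N" "x \<in> Bi i" using cover_pre[OF x] by blast
    then show "p \<in> Q" using px by (auto simp: Q_def)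
  qed
  have "emeasure Mp (f -` Abad \<inter> space Mp) \<le> emeasure Mp Q"
    using QN sub by (intro emeasure_mono) auto
  moreover have "emeasure Mp Q = 0" by (rule null_setsD1[OF QN])
  ultimately have z: "emeasure Mp (f -` Abad \<inter> space Mp) = 0" by simp
  show ?thesis
    unfolding poisson_P0_def f_def[symmetric] distr_def emeasure_measure_of_conv using z by simp
qed

end

theorem proposition4p1:
  fixes T :: real and lam :: "real \<Rightarrow> real list \<Rightarrow> real"
    and k :: "nat \<Rightarrow> nat" and a b :: "nat \<Rightarrow> nat \<Rightarrow> real"
  assumes "T > 0"
    and "conditional_intensity T lam"
    and "dissecting T k a b"
  shows "AE \<phi> in poisson_P0 T.
           ((\<lambda>n. S_int (k n) (a n) (b n) (\<lambda>i. p_int lam \<phi> (a n i) (b n i)) \<phi>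
                 + ereal (\<Sum>i<k n. if card (\<phi> \<inter> {a n i<..b n i}) > 0 then ln (b n i - a n i) else 0))
            \<longlonglongrightarrow> S_ll T lam \<phi>)"
proof -
  interpret full T k a b lam
    using assms by (intro full.intro dis.intro full_axioms.intro)
  have sets_P0: "sets (poisson_P0 T) = sets CS" by (simp add: poisson_P0_def)
  have space_P0: "space (poisson_P0 T) = space CS" by (simp add: poisson_P0_def)
  have "Abad \<in> null_sets (poisson_P0 T)"
    using P0_null Abad_sets sets_P0 by (simp add: null_sets_def)
  then show ?thesis
  proof (rule AE_I')
    show "{\<phi> \<in> space (poisson_P0 T). \<not> ((\<lambda>n. S_int (k n) (a n) (b n) (\<lambda>i. p_int lam \<phi> (a n i) (b n i)) \<phi>
                 + ereal (\<Sum>i<k n. if card (\<phi> \<inter> {a n i<..b n i}) > 0 then ln (b n i - a n i) else 0))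
            \<longlonglongrightarrow> S_ll T lam \<phi>)} \<subseteq> Abad"
    proof (rule subsetI, rule ccontr)
      fix \<phi> assume \<phi>: "\<phi> \<in> {\<phi> \<in> space (poisson_P0 T). \<not> ((\<lambda>n. S_int (k n) (a n) (b n) (\<lambda>i. p_int lam \<phi> (a n i) (b n i)) \<phi>
                 + ereal (\<Sum>i<k n. if card (\<phi> \<inter> {a n i<..b n i}) > 0 then ln (b n i - a n i) else 0))
            \<longlonglongrightarrow> S_ll T lam \<phi>)}" and nA: "\<phi> \<notin> Abad"
      interpret D: det T k a b lam \<phi> using ok_det[of \<phi>] \<phi> nA space_P0 by simp
      show False using D.det_main \<phi> unfolding D.LHS_def by simp
    qed
  qed
qed


end
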